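(* Let $n \geq 1$ and let $G$ be a simple graph on the vertex set $[n]=\{1,\ldots,n\}$. Let $\mathcal{S}_{n,G}$ be the arrangement of affine hyperplanes in $\mathbb{R}^n$ consisting of the hyperplanes $x_i - x_j = 0$ for all $1 \leq i < j \leq n$, together with the hyperplanes $x_i - x_j = 1$ for all $1 \leq i < j \leq n$ such that $\{i,j\}$ is an edge of $G$. Let $\mathbb{Z}_{n+1}$ be the group of integers modulo $n+1$ and let $H$ be the cyclic subgroup of $\mathbb{Z}_{n+1}^n$ generated by $(1,1,\ldots,1)$. Then the regions of $\mathcal{S}_{n,G}$ are in bijection with the cosets $(a_1,\ldots,a_n)+H \in \mathbb{Z}_{n+1}^n/H$ satisfying the following condition: for every $i \in [n]$, if there exists $j$ with $i<j$ and $a_i=a_j$, and $j$ is the smallest such integer, then $\{i,j\}$ is an edge of $G$.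
   Context: A region of a finite arrangement of affine hyperplanes in $\mathbb{R}^n$ is a connected component of the complement in $\mathbb{R}^n$ of the union of the hyperplanes. The condition on cosets is well defined since adding $(1,\ldots,1)$ preserves which coordinates are equal. *)

theory Defs
  imports "HOL-Analysis.Analysis"
begin

text \<open>Coordinates of R^n are indexed by a finite linearly ordered type 'n
  (order-isomorphic to [n] with n = CARD('n)).\<close>

definition simple_graph_edges :: "'a set set \<Rightarrow> bool" where
  "simple_graph_edges E \<longleftrightarrow> (\<forall>e\<in>E. card e = 2)"

definition arrS :: "('n::{finite,linorder}) set set \<Rightarrow> (real ^ ('n::{finite,linorder})) set set" where
  "arrS E = {{x. x $ i - x $ j = 0} | i j. i < j}
          \<union> {{x. x $ i - x $ j = 1} | i j. i < j \<and> {i, j} \<in> E}"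

definition regions :: "(real ^ 'n::finite) set set \<Rightarrow> (real ^ 'n) set set" where
  "regions A = components (UNIV - \<Union>A)"

text \<open>Z_{n+1}^n, elements represented with coordinates in {0..n}, n = CARD('n).\<close>
definition zvecs :: "('n::finite \<Rightarrow> nat) set" where
  "zvecs = {a. \<forall>i. a i < CARD('n) + 1}"

text \<open>Congruence modulo H = <(1,...,1)>.\<close>
definition cosetrel :: "(('n::finite \<Rightarrow> nat) \<times> ('n \<Rightarrow> nat)) set" where
  "cosetrel = {(a, b). a \<in> zvecs \<and> b \<in> zvecs \<and>
       (\<exists>c::nat. \<forall>i. b i = (a i + c) mod (CARD('n) + 1))}"

definition cosets :: "('n::finite \<Rightarrow> nat) set set" where
  "cosets = zvecs // cosetrel"

definition good_vec :: "('n::{finite,linorder}) set set \<Rightarrow> ('n \<Rightarrow> nat) \<Rightarrow> bool" where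
  "good_vec E a \<longleftrightarrow> (\<forall>i. (\<exists>j. i < j \<and> a i = a j) \<longrightarrow>
       {i, LEAST j. i < j \<and> a i = a j} \<in> E)"

definition good_cosets :: "('n::{finite,linorder}) set set \<Rightarrow> ('n \<Rightarrow> nat) set set" where
  "good_cosets E = {C \<in> cosets. \<forall>a\<in>C. good_vec E a}"

end

theory Submission
  imports Defs
begin

definition distc :: "real^'n \<Rightarrow> bool" where
  "distc x \<longleftrightarrow> (\<forall>i j. i \<noteq> j \<longrightarrow> x$i \<noteq> x$j)"

definition gen :: "('n::{finite,linorder}) set set \<Rightarrow> real^('n::{finite,linorder}) \<Rightarrow> bool" where
  "gen E x \<longleftrightarrow> distc x \<and> (\<forall>i j. i < j \<and> {i,j} \<in> E \<longrightarrow> x$i - x$j \<noteq> 1)"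

lemma gen_iff:
  fixes x :: "real^('n::{finite,linorder})"
  shows "x \<in> UNIV - \<Union>(arrS E) \<longleftrightarrow> gen E x"
proof
  assume "x \<in> UNIV - \<Union>(arrS E)"
  hence nx: "\<And>H. H \<in> arrS E \<Longrightarrow> x \<notin> H" by auto
  have "distc x"
    unfolding distc_def
  proof (intro allI impI)
    fix i j :: 'n assume "i \<noteq> j"
    show "x$i \<noteq> x$j"
    proof (cases "i < j")
      case True
      hence "{x. x $ i - x $ j = 0} \<in> arrS E" unfolding arrS_def by blast
      thus ?thesis using nx by fastforce
    next
      case False
      hence "j < i" using \<open>i \<noteq> j\<close> by auto
      hence "{x. x $ j - x $ i = 0} \<in> arrS E" unfolding arrS_def by blast
      thus ?thesis using nx by fastforce
    qed
  qed
  moreover have "\<forall>i j. i < j \<and> {i,j} \<in> E \<longrightarrow> x$i - x$j \<noteq> 1"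
  proof (intro allI impI)
    fix i j :: 'n assume "i < j \<and> {i,j} \<in> E"
    hence "{x. x $ i - x $ j = 1} \<in> arrS E" unfolding arrS_def by blast
    thus "x$i - x$j \<noteq> 1" using nx by fastforce
  qed
  ultimately show "gen E x" unfolding gen_def by blast
next
  assume g: "gen E x"
  show "x \<in> UNIV - \<Union>(arrS E)"
  proof
    show "x \<notin> \<Union>(arrS E)"
    proof
      assume "x \<in> \<Union>(arrS E)"
      then obtain H where H: "H \<in> arrS E" "x \<in> H" by blast
      from H(1) consider (a) i j where "i < j" "H = {x. x $ i - x $ j = 0}"
        | (b) i j where "i < j" "{i,j} \<in> E" "H = {x. x $ i - x $ j = 1}"
        unfolding arrS_def by blast
      thus False
      proof cases
        case a thus ?thesis using H(2) g unfolding gen_def distc_def by force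
      next
        case b thus ?thesis using H(2) g unfolding gen_def by force
      qed
    qed
  qed simp
qed

definition rk :: "real^'n \<Rightarrow> 'n \<Rightarrow> nat" where
  "rk x i = card {k. x$k < x$i}"

lemma rk_less_iff: "rk x i < rk x j \<longleftrightarrow> x$i < x$j"
proof
  assume "x$i < x$j"
  hence "{k. x$k < x$i} \<subset> {k. x$k < x$j}" by auto
  thus "rk x i < rk x j" unfolding rk_def by (simp add: psubset_card_mono)
next
  assume a: "rk x i < rk x j"
  show "x$i < x$j"
  proof (rule ccontr)
    assume "\<not> x$i < x$j"
    hence "{k. x$k < x$j} \<subseteq> {k. x$k < x$i}" by auto
    hence "rk x j \<le> rk x i" unfolding rk_def by (simp add: card_mono)
    thus False using a by simp
  qed
qed

lemma rk_lt: "rk (x::real^'n::finite) i < CARD('n)"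
proof -
  have "{k. x$k < x$i} \<subset> (UNIV::'n set)" by auto
  thus ?thesis unfolding rk_def by (simp add: psubset_card_mono)
qed

lemma rk_inj: "distc x \<Longrightarrow> rk x i = rk x j \<Longrightarrow> i = j"
  using rk_less_iff[of x i j] rk_less_iff[of x j i] unfolding distc_def
  by (metis linorder_neqE_linordered_idom nat_neq_iff)

lemma rk_bij: "distc (x::real^'n::finite) \<Longrightarrow> bij_betw (rk x) (UNIV::'n set) {..<CARD('n)}"
proof -
  assume d: "distc x"
  have inj: "inj (rk x)" using rk_inj[OF d] by (meson injI)
  have sub: "range (rk x) \<subseteq> {..<CARD('n)}" using rk_lt by auto
  have "card (range (rk x)) = CARD('n)" using inj by (simp add: card_image)
  hence "range (rk x) = {..<CARD('n)}"
    using sub by (metis card_lessThan card_subset_eq finite_lessThan)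
  thus ?thesis using inj by (simp add: bij_betw_def)
qed

lemma rk_surj: "distc (x::real^'n::finite) \<Longrightarrow> k < CARD('n) \<Longrightarrow> \<exists>i::'n. rk x i = k"
  using rk_bij[of x] unfolding bij_betw_def by (metis imageE lessThan_iff)

definition obs :: "('n::{finite,linorder}) set set \<Rightarrow> real^('n::{finite,linorder}) \<Rightarrow> 'n \<Rightarrow> 'n \<Rightarrow> bool" where
  "obs E x i j \<longleftrightarrow> i < j \<and> {i,j} \<in> E \<and> x$j < x$i \<and> x$i < x$j + 1"

definition tie :: "('n::{finite,linorder}) set set \<Rightarrow> real^('n::{finite,linorder}) \<Rightarrow> 'n \<Rightarrow> 'n \<Rightarrow> bool" where
  "tie E x i j \<longleftrightarrow> obs E x i j \<and>
     \<not>(\<exists>k l. obs E x k l \<and> (k,l) \<noteq> (i,j) \<and> x$l \<le> x$j \<and> x$i \<le> x$k)"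

definition gv :: "('n::{finite,linorder}) set set \<Rightarrow> real^('n::{finite,linorder}) \<Rightarrow> 'n \<Rightarrow> nat" where
  "gv E x i = Min (rk x ` {k. (tie E x)\<^sup>*\<^sup>* i k})"

lemma tie_obs: "tie E x i j \<Longrightarrow> obs E x i j"
  unfolding tie_def by blast

lemma tie_basic: "tie E x i j \<Longrightarrow> i < j \<and> {i,j} \<in> E \<and> x$j < x$i"
  unfolding tie_def obs_def by blast

lemma tie_maxD: "tie E x i j \<Longrightarrow> obs E x k l \<Longrightarrow> x$l \<le> x$j \<Longrightarrow> x$i \<le> x$k \<Longrightarrow> k = i \<and> l = j"
  unfolding tie_def by blast

lemma tie_fun: "tie E x i j \<Longrightarrow> tie E x i j' \<Longrightarrow> j = j'"
proof -
  assume a: "tie E x i j" "tie E x i j'"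
  show "j = j'"
  proof (cases "x$j \<le> x$j'")
    case True
    thus ?thesis using tie_maxD[OF a(2) tie_obs[OF a(1)]] by simp
  next
    case False
    hence "x$j' \<le> x$j" by simp
    thus ?thesis using tie_maxD[OF a(1) tie_obs[OF a(2)]] by simp
  qed
qed

lemma tie_inj: "tie E x i j \<Longrightarrow> tie E x i' j \<Longrightarrow> i = i'"
proof -
  assume a: "tie E x i j" "tie E x i' j"
  show "i = i'"
  proof (cases "x$i \<le> x$i'")
    case True
    thus ?thesis using tie_maxD[OF a(1) tie_obs[OF a(2)]] by simp
  next
    case False
    hence "x$i' \<le> x$i" by simp
    thus ?thesis using tie_maxD[OF a(2) tie_obs[OF a(1)]] by simp
  qed
qed

lemma tie_mono: "tie E x t u \<Longrightarrow> tie E x t' u' \<Longrightarrow> x$u < x$u' \<Longrightarrow> x$t < x$t'"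
proof (rule ccontr)
  assume a: "tie E x t u" "tie E x t' u'" "x$u < x$u'" "\<not> x$t < x$t'"
  hence "x$t' \<le> x$t" by simp
  from tie_maxD[OF a(2) tie_obs[OF a(1)] _ this] a(3) have "u = u'" by simp
  thus False using a(3) by simp
qed

lemma obs_nested_tie:
  assumes d: "distc x" and o: "obs E x i j"
  shows "\<exists>k l. tie E x k l \<and> x$l \<le> x$j \<and> x$i \<le> x$k"
proof -
  define W where "W = {(k,l). obs E x k l \<and> x$l \<le> x$j \<and> x$i \<le> x$k}"
  have fin: "finite W" by simp
  have ne: "(i,j) \<in> W" using o unfolding W_def by simp
  define f where "f = (\<lambda>p. x$(fst p) - x$(snd p))"
  have fW: "finite (f ` W)" "f ` W \<noteq> {}" using fin ne by auto
  obtain p where p1: "p \<in> W" "f p = Max (f ` W)" using Max_in[OF fW] by auto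
  have p: "p \<in> W" "\<And>q. q \<in> W \<Longrightarrow> f q \<le> f p"
    using p1 Max_ge[OF fW(1)] by auto
  obtain k l where kl: "p = (k,l)" by (cases p)
  have pk: "obs E x k l" "x$l \<le> x$j" "x$i \<le> x$k" using p(1) kl unfolding W_def by auto
  have "tie E x k l"
    unfolding tie_def
  proof (intro conjI notI)
    show "obs E x k l" by fact
  next
    assume "\<exists>k' l'. obs E x k' l' \<and> (k', l') \<noteq> (k, l) \<and> x $ l' \<le> x $ l \<and> x $ k \<le> x $ k'"
    then obtain k' l' where q: "obs E x k' l'" "(k', l') \<noteq> (k, l)" "x $ l' \<le> x $ l" "x $ k \<le> x $ k'"
      by blast
    have "(k',l') \<in> W" using q pk unfolding W_def by auto
    hence "f (k',l') \<le> f (k,l)" using p(2) kl by blast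
    hence "x$l' = x$l" "x$k' = x$k" using q(3,4) unfolding f_def by auto
    hence "l' = l" "k' = k" using d unfolding distc_def by metis+
    thus False using q(2) by simp
  qed
  thus ?thesis using pk by blast
qed

lemma obs_iff_nested:
  assumes d: "distc x"
  shows "obs E x i j \<longleftrightarrow> i < j \<and> {i,j} \<in> E \<and> x$j < x$i \<and>
     (\<exists>k l. tie E x k l \<and> x$l \<le> x$j \<and> x$i \<le> x$k)"
proof
  assume "obs E x i j" thus "i < j \<and> {i,j} \<in> E \<and> x$j < x$i \<and>
     (\<exists>k l. tie E x k l \<and> x$l \<le> x$j \<and> x$i \<le> x$k)"
    using obs_nested_tie[OF d] unfolding obs_def by blast
next
  assume a: "i < j \<and> {i,j} \<in> E \<and> x$j < x$i \<and>
     (\<exists>k l. tie E x k l \<and> x$l \<le> x$j \<and> x$i \<le> x$k)"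
  then obtain k l where kl: "tie E x k l" "x$l \<le> x$j" "x$i \<le> x$k" by blast
  have "x$k < x$l + 1" using tie_obs[OF kl(1)] unfolding obs_def by blast
  hence "x$i < x$j + 1" using kl by linarith
  thus "obs E x i j" using a unfolding obs_def by blast
qed

lemma tie_rtrancl_le: "(tie E x)\<^sup>*\<^sup>* i k \<Longrightarrow> x$k \<le> x$i \<and> i \<le> k"
proof (induction rule: rtranclp_induct)
  case base thus ?case by simp
next
  case (step y z)
  thus ?case using tie_basic[OF step(2)] by auto
qed

lemma tie_trancl_lt: "(tie E x)\<^sup>+\<^sup>+ i k \<Longrightarrow> x$k < x$i \<and> i < k"
proof (induction rule: tranclp_induct)
  case (base y) thus ?case using tie_basic[OF base] by auto
next
  case (step y z)
  thus ?case using tie_basic[OF step(2)] by auto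
qed

lemma tie_reach_insert:
  assumes "tie E x i j"
  shows "{k. (tie E x)\<^sup>*\<^sup>* i k} = insert i {k. (tie E x)\<^sup>*\<^sup>* j k}"
proof
  show "{k. (tie E x)\<^sup>*\<^sup>* i k} \<subseteq> insert i {k. (tie E x)\<^sup>*\<^sup>* j k}"
  proof
    fix k assume "k \<in> {k. (tie E x)\<^sup>*\<^sup>* i k}"
    hence "(tie E x)\<^sup>*\<^sup>* i k" by simp
    thus "k \<in> insert i {k. (tie E x)\<^sup>*\<^sup>* j k}"
    proof (cases rule: converse_rtranclpE)
      case base thus ?thesis by simp
    next
      case (step j')
      hence "j' = j" using tie_fun assms by metis
      thus ?thesis using step by simp
    qed
  qed
next
  show "insert i {k. (tie E x)\<^sup>*\<^sup>* j k} \<subseteq> {k. (tie E x)\<^sup>*\<^sup>* i k}"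
  proof
    fix k assume "k \<in> insert i {k. (tie E x)\<^sup>*\<^sup>* j k}"
    hence "k = i \<or> (tie E x)\<^sup>*\<^sup>* j k" by simp
    thus "k \<in> {k. (tie E x)\<^sup>*\<^sup>* i k}"
    proof
      assume "(tie E x)\<^sup>*\<^sup>* j k"
      hence "(tie E x)\<^sup>*\<^sup>* i k" by (rule converse_rtranclp_into_rtranclp[of "tie E x" i j, OF assms])
      thus ?thesis by simp
    qed simp
  qed
qed

lemma gv_tie:
  assumes "tie E x i j"
  shows "gv E x i = gv E x j"
proof -
  have fin: "finite (rk x ` {k. (tie E x)\<^sup>*\<^sup>* j k})" by simp
  have ne: "rk x ` {k. (tie E x)\<^sup>*\<^sup>* j k} \<noteq> {}" by auto
  have "Min (rk x ` {k. (tie E x)\<^sup>*\<^sup>* j k}) \<le> rk x j" using fin by auto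
  also have "rk x j < rk x i" using tie_basic[OF assms] rk_less_iff by blast
  finally have lt: "Min (rk x ` {k. (tie E x)\<^sup>*\<^sup>* j k}) < rk x i" .
  have "gv E x i = Min (insert (rk x i) (rk x ` {k. (tie E x)\<^sup>*\<^sup>* j k}))"
    unfolding gv_def tie_reach_insert[OF assms] by simp
  also have "\<dots> = min (rk x i) (Min (rk x ` {k. (tie E x)\<^sup>*\<^sup>* j k}))"
    using fin ne by simp
  also have "\<dots> = gv E x j" unfolding gv_def using lt by simp
  finally show ?thesis .
qed

lemma gv_bot:
  assumes "\<And>c. \<not> tie E x i c"
  shows "gv E x i = rk x i"
proof -
  have "{k. (tie E x)\<^sup>*\<^sup>* i k} = {i}"
  proof (auto)
    fix k assume "(tie E x)\<^sup>*\<^sup>* i k"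
    thus "k = i" using assms by (cases rule: converse_rtranclpE) auto
  qed
  thus ?thesis unfolding gv_def by simp
qed

lemma gv_bottom_ex:
  "\<exists>b. (tie E x)\<^sup>*\<^sup>* i b \<and> (\<forall>c. \<not> tie E x b c) \<and> gv E x i = rk x b"
proof (induction "rk x i" arbitrary: i rule: less_induct)
  case less
  show ?case
  proof (cases "\<exists>j. tie E x i j")
    case True
    then obtain j where j: "tie E x i j" by blast
    have "rk x j < rk x i" using tie_basic[OF j] rk_less_iff by blast
    from less[OF this] obtain b where b: "(tie E x)\<^sup>*\<^sup>* j b" "\<forall>c. \<not> tie E x b c" "gv E x j = rk x b"
      by blast
    have "(tie E x)\<^sup>*\<^sup>* i b" using j b(1) by (rule converse_rtranclp_into_rtranclp)
    thus ?thesis using b gv_tie[OF j] by auto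
  next
    case False
    thus ?thesis using gv_bot[of E x i] by auto
  qed
qed

lemma rtranclpE' [consumes 1, case_names base step]:
  assumes "r\<^sup>*\<^sup>* a b"
  obtains (base) "a = b" | (step) y where "r\<^sup>*\<^sup>* a y" "r y b"
  using assms by (cases rule: rtranclp.cases) auto

lemma tie_comparable:
  "(tie E x)\<^sup>*\<^sup>* i b \<Longrightarrow> (tie E x)\<^sup>*\<^sup>* j b \<Longrightarrow> (tie E x)\<^sup>*\<^sup>* i j \<or> (tie E x)\<^sup>*\<^sup>* j i"
proof (induction arbitrary: j rule: rtranclp_induct)
  case base thus ?case by simp
next
  case (step m b)
  from step.prems show ?case
  proof (cases rule: rtranclpE')
    case base
    thus ?thesis using step.hyps rtranclp.rtrancl_into_rtrancl by metis
  next
    case (step m')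
    hence "m' = m" using tie_inj \<open>tie E x m b\<close> by metis
    thus ?thesis using step.IH step(1) by blast
  qed
qed

lemma gv_same_chain:
  assumes d: "distc x" and e: "gv E x i = gv E x j"
  shows "(tie E x)\<^sup>*\<^sup>* i j \<or> (tie E x)\<^sup>*\<^sup>* j i"
proof -
  obtain b where b: "(tie E x)\<^sup>*\<^sup>* i b" "gv E x i = rk x b" using gv_bottom_ex by blast
  obtain b' where b': "(tie E x)\<^sup>*\<^sup>* j b'" "gv E x j = rk x b'" using gv_bottom_ex by blast
  have "b = b'" using rk_inj[OF d] b b' e by metis
  thus ?thesis using tie_comparable b b' by metis
qed

lemma gv_rtrancl: "(tie E x)\<^sup>*\<^sup>* i k \<Longrightarrow> gv E x i = gv E x k"
  by (induction rule: rtranclp_induct) (auto dest: gv_tie)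

definition Sa :: "('n::linorder \<Rightarrow> nat) \<Rightarrow> 'n \<Rightarrow> 'n \<Rightarrow> bool" where
  "Sa a t u \<longleftrightarrow> t < u \<and> a t = a u \<and> (\<forall>k. t < k \<and> k < u \<longrightarrow> a k \<noteq> a t)"

lemma tie_iff_Sa:
  assumes d: "distc x"
  shows "tie E x t u \<longleftrightarrow> Sa (gv E x) t u"
proof
  assume tu: "tie E x t u"
  have tu': "t < u" using tie_basic[OF tu] by blast
  have g: "gv E x t = gv E x u" using gv_tie[OF tu] .
  have "\<forall>k. t < k \<and> k < u \<longrightarrow> gv E x k \<noteq> gv E x t"
  proof (intro allI impI notI)
    fix k assume k: "t < k \<and> k < u" "gv E x k = gv E x t"
    from gv_same_chain[OF d k(2)] show False
    proof
      assume "(tie E x)\<^sup>*\<^sup>* k t"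
      thus False using tie_rtrancl_le k(1) by fastforce
    next
      assume "(tie E x)\<^sup>*\<^sup>* t k"
      thus False
      proof (cases rule: converse_rtranclpE)
        case base thus False using k by simp
      next
        case (step v)
        hence "v = u" using tie_fun tu by metis
        thus False using step(2) tie_rtrancl_le k(1) by fastforce
      qed
    qed
  qed
  thus "Sa (gv E x) t u" unfolding Sa_def using tu' g by blast
next
  assume s: "Sa (gv E x) t u"
  hence tu: "t < u" "gv E x t = gv E x u" unfolding Sa_def by auto
  from gv_same_chain[OF d tu(2)] have "(tie E x)\<^sup>*\<^sup>* t u"
    using tie_rtrancl_le tu(1) by fastforce
  thus "tie E x t u"
  proof (cases rule: converse_rtranclpE)
    case base thus ?thesis using tu by simp
  next
    case (step v)
    have "t < v" using tie_basic[OF step(1)] by blast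
    have "v \<le> u" using tie_rtrancl_le[OF step(2)] by blast
    have "gv E x v = gv E x t" using gv_tie[OF step(1)] by simp
    hence "\<not> v < u" using s \<open>t < v\<close> unfolding Sa_def by blast
    hence "v = u" using \<open>v \<le> u\<close> by simp
    thus ?thesis using step(1) by simp
  qed
qed

lemma least_finite:
  fixes P :: "'n::{finite,linorder} \<Rightarrow> bool"
  assumes "P j0"
  shows "P (LEAST j. P j) \<and> (\<forall>k. P k \<longrightarrow> (LEAST j. P j) \<le> k)"
proof -
  define m where "m = Min {j. P j}"
  have f: "finite {j. P j}" "{j. P j} \<noteq> {}" using assms by auto
  have m: "P m" using Min_in[OF f] unfolding m_def by simp
  have mle: "\<And>k. P k \<Longrightarrow> m \<le> k" using Min_le[OF f(1)] unfolding m_def by simp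
  have "(LEAST j. P j) = m" using m mle by (intro Least_equality) auto
  thus ?thesis using m mle by simp
qed

lemma gv_good:
  assumes d: "distc x"
  shows "good_vec E (gv E x)"
  unfolding good_vec_def
proof (intro allI impI)
  fix i assume ex: "\<exists>j>i. gv E x i = gv E x j"
  define j where "j = (LEAST j. i < j \<and> gv E x i = gv E x j)"
  obtain j0 where j0: "i < j0 \<and> gv E x i = gv E x j0" using ex by blast
  note L = least_finite[of "\<lambda>j. i < j \<and> gv E x i = gv E x j", OF j0, folded j_def]
  have j: "i < j" "gv E x i = gv E x j" using L by auto
  have "\<forall>k. i < k \<and> k < j \<longrightarrow> gv E x k \<noteq> gv E x i"
    using L by fastforce
  hence "Sa (gv E x) i j" unfolding Sa_def using j by auto
  hence "tie E x i j" using tie_iff_Sa[OF d] by blast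
  thus "{i, j} \<in> E" using tie_basic by blast
qed

lemma gv_lt: "gv E (x::real^'n::{finite,linorder}) i < CARD('n)"
proof -
  have "gv E x i \<le> rk x i" unfolding gv_def by simp
  thus ?thesis using rk_lt[of x i] by simp
qed

definition sim :: "('n::{finite,linorder}) set set \<Rightarrow> real^('n::{finite,linorder}) \<Rightarrow> real^('n::{finite,linorder}) \<Rightarrow> bool" where
  "sim E x y \<longleftrightarrow> (\<forall>i j. x$i < x$j \<longleftrightarrow> y$i < y$j) \<and>
     (\<forall>i j. i < j \<and> {i,j} \<in> E \<longrightarrow> (x$i - x$j < 1 \<longleftrightarrow> y$i - y$j < 1))"

lemma sim_gv:
  assumes s: "sim E x y"
  shows "gv E x = gv E y"
proof -
  have lt: "\<And>i j. x$i < x$j \<longleftrightarrow> y$i < y$j" using s unfolding sim_def by blast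
  have le: "\<And>i j. x$i \<le> x$j \<longleftrightarrow> y$i \<le> y$j" using lt by (meson not_less)
  have cl: "\<And>i j. i < j \<and> {i,j} \<in> E \<Longrightarrow> (x$i - x$j < 1 \<longleftrightarrow> y$i - y$j < 1)"
    using s unfolding sim_def by blast
  have ob: "\<And>i j. obs E x i j \<longleftrightarrow> obs E y i j"
  proof -
    fix i j
    have "obs E x i j \<longleftrightarrow> i < j \<and> {i,j} \<in> E \<and> x$j < x$i \<and> x$i - x$j < 1"
      unfolding obs_def by auto
    also have "\<dots> \<longleftrightarrow> i < j \<and> {i,j} \<in> E \<and> y$j < y$i \<and> y$i - y$j < 1"
      using lt cl by blast
    also have "\<dots> \<longleftrightarrow> obs E y i j" unfolding obs_def by auto
    finally show "obs E x i j \<longleftrightarrow> obs E y i j" .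
  qed
  have ti: "tie E x = tie E y"
    unfolding tie_def[abs_def] using ob le by (intro ext) simp
  have rk: "rk x = rk y"
    unfolding rk_def[abs_def] using lt by (intro ext) simp
  show ?thesis unfolding gv_def[abs_def] ti rk ..
qed

lemma gv_eq_rk:
  fixes x y :: "real^('n::{finite,linorder})"
  assumes dx: "distc x" and dy: "distc y" and eq: "gv E x = gv E y"
  shows "rk x = rk y"
proof -
  have T: "\<And>t u. tie E x t u \<longleftrightarrow> tie E y t u"
    using tie_iff_Sa[OF dx] tie_iff_Sa[OF dy] eq by simp
  have key: "\<And>k. \<forall>i. rk x i = k \<longrightarrow> rk y i = k"
  proof -
    fix k show "\<forall>i. rk x i = k \<longrightarrow> rk y i = k"
    proof (induction k rule: less_induct)
      case (less k)
      have IH2: "\<And>i. rk x i < k \<or> rk y i < k \<Longrightarrow> rk x i = rk y i"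
      proof -
        fix i assume "rk x i < k \<or> rk y i < k"
        thus "rk x i = rk y i"
        proof
          assume "rk x i < k" thus ?thesis using less.IH by metis
        next
          assume a: "rk y i < k"
          obtain w where w: "rk x w = rk y i" using rk_surj[OF dx rk_lt[of y i]] by blast
          hence "rk y w = rk x w" using less.IH a by metis
          hence "w = i" using rk_inj[OF dy] w by metis
          thus ?thesis using w by simp
        qed
      qed
      show ?case
      proof (intro allI impI)
        fix i assume ri: "rk x i = k"
        have kN: "k < CARD('n)" using ri rk_lt[of x i] by simp
        obtain j where rj: "rk y j = k" using rk_surj[OF dy kN] by blast
        show "rk y i = k"
        proof (cases "\<exists>u. tie E x i u")
          case False
          hence "gv E x i = rk x i" using gv_bot by metis
          moreover have "gv E y i = rk y i" using gv_bot False T by metis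
          ultimately show ?thesis using eq ri by simp
        next
          case True
          then obtain u where u: "tie E x i u" by blast
          show ?thesis
          proof (cases "\<exists>v. tie E y j v")
            case False
            hence "gv E y j = rk y j" using gv_bot by metis
            moreover have "gv E x j = rk x j" using gv_bot False T by metis
            ultimately have "rk x j = k" using eq rj by simp
            hence "j = i" using rk_inj[OF dx] ri by metis
            thus ?thesis using rj by simp
          next
            case True
            then obtain v where v: "tie E y j v" by blast
            show ?thesis
            proof (rule ccontr)
              assume ne: "rk y i \<noteq> k"
              hence ij: "i \<noteq> j" using rj by auto
              have uy: "tie E y i u" using u T by simp
              have vx: "tie E x j v" using v T by simp
              have uv: "u \<noteq> v" using tie_inj[OF u] vx ij by metis
              have "x$u < x$i" using tie_basic[OF u] by blast
              hence "rk x u < k" using ri rk_less_iff by metis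
              hence ru: "rk y u = rk x u" using IH2 by metis
              have "y$v < y$j" using tie_basic[OF v] by blast
              hence "rk y v < k" using rj rk_less_iff by metis
              hence rv: "rk x v = rk y v" using IH2 by metis
              have "rk x u \<noteq> rk x v" using rk_inj[OF dx] uv by metis
              hence "rk x u < rk x v \<or> rk x v < rk x u" by arith
              thus False
              proof
                assume a: "rk x u < rk x v"
                hence "y$u < y$v" using ru rv rk_less_iff by metis
                hence "y$i < y$j" using tie_mono[OF uy v] by blast
                hence "rk y i < k" using rj rk_less_iff by metis
                hence "rk x i = rk y i" using IH2 by blast
                thus False using ri \<open>rk y i < k\<close> by simp
              next
                assume a: "rk x v < rk x u"
                hence "x$v < x$u" using rk_less_iff by metis
                hence "x$j < x$i" using tie_mono[OF vx u] by blast
                hence "rk x j < k" using ri rk_less_iff by metis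
                hence "rk x j = rk y j" using IH2 by blast
                thus False using rj \<open>rk x j < k\<close> by simp
              qed
            qed
          qed
        qed
      qed
    qed
  qed
  show ?thesis
  proof
    fix i show "rk x i = rk y i" using key[of "rk x i"] by simp
  qed
qed

lemma gv_eq_sim:
  fixes x y :: "real^('n::{finite,linorder})"
  assumes dx: "distc x" and dy: "distc y" and eq: "gv E x = gv E y"
  shows "sim E x y"
proof -
  have r: "rk x = rk y" using gv_eq_rk[OF dx dy eq] .
  have lt: "\<And>i j. x$i < x$j \<longleftrightarrow> y$i < y$j" using r rk_less_iff by metis
  have le: "\<And>i j. x$i \<le> x$j \<longleftrightarrow> y$i \<le> y$j" using lt by (meson not_less)
  have T: "tie E x = tie E y"
    using tie_iff_Sa[OF dx] tie_iff_Sa[OF dy] eq by (intro ext) simp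
  have ob: "\<And>i j. obs E x i j \<longleftrightarrow> obs E y i j"
    unfolding obs_iff_nested[OF dx] obs_iff_nested[OF dy] T using lt le by blast
  have cl: "\<And>z::real^('n::{finite,linorder}). distc z \<Longrightarrow> i < j \<Longrightarrow> {i,j} \<in> E \<Longrightarrow>
       (z$i - z$j < 1 \<longleftrightarrow> z$i < z$j \<or> obs E z i j)" for i j
  proof -
    fix z :: "real^('n::{finite,linorder})" assume dz: "distc z" and ij: "i < j" "{i,j} \<in> E"
    have "z$i \<noteq> z$j" using dz ij unfolding distc_def by auto
    thus "z$i - z$j < 1 \<longleftrightarrow> z$i < z$j \<or> obs E z i j"
      unfolding obs_def using ij by auto
  qed
  show ?thesis unfolding sim_def
  proof (intro conjI allI impI)
    fix i j show "x$i < x$j \<longleftrightarrow> y$i < y$j" using lt by blast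
  next
    fix i j :: 'n assume ij: "i < j \<and> {i,j} \<in> E"
    show "x$i - x$j < 1 \<longleftrightarrow> y$i - y$j < 1"
      using cl[OF dx] cl[OF dy] ij lt ob by blast
  qed
qed

lemma sign_const:
  fixes h :: "'a::topological_space \<Rightarrow> real"
  assumes "connected C" "continuous_on C h" "\<forall>z\<in>C. h z \<noteq> c" "x \<in> C" "y \<in> C"
  shows "h x < c \<longleftrightarrow> h y < c"
proof -
  have con: "connected (h ` C)" using connected_continuous_image assms(1,2) by blast
  have iv: "\<And>p q r. p \<in> h ` C \<Longrightarrow> q \<in> h ` C \<Longrightarrow> p \<le> r \<Longrightarrow> r \<le> q \<Longrightarrow> r \<in> h ` C"
    using con unfolding connected_iff_interval by blast
  have nc: "c \<notin> h ` C" using assms(3) by auto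
  have hx: "h x \<in> h ` C" "h y \<in> h ` C" using assms(4,5) by auto
  show ?thesis
  proof
    assume a: "h x < c"
    show "h y < c"
    proof (rule ccontr)
      assume "\<not> h y < c"
      hence "c \<le> h y" by simp
      thus False using iv[OF hx(1) hx(2)] a nc by force
    qed
  next
    assume a: "h y < c"
    show "h x < c"
    proof (rule ccontr)
      assume "\<not> h x < c"
      hence "c \<le> h x" by simp
      thus False using iv[OF hx(2) hx(1)] a nc by force
    qed
  qed
qed

lemma regions_eq: "regions (arrS E) = components {z. gen E z}"
proof -
  have "UNIV - \<Union>(arrS E) = {z. gen E z}" using gen_iff by blast
  thus ?thesis unfolding regions_def by simp
qed

lemma comp_sim:
  fixes x y :: "real^('n::{finite,linorder})"
  assumes C: "C \<in> components {z. gen E z}" and xy: "x \<in> C" "y \<in> C"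
  shows "sim E x y"
proof -
  have sub: "C \<subseteq> {z. gen E z}" using C in_components_subset by blast
  have con: "connected C" using C in_components_connected by blast
  have ord: "x$i < x$j \<longleftrightarrow> y$i < y$j" for i j
  proof (cases "i = j")
    case True thus ?thesis by simp
  next
    case False
    have "\<forall>z\<in>C. z$i - z$j \<noteq> 0" using sub False unfolding gen_def distc_def by auto
    moreover have "continuous_on C (\<lambda>z::real^('n::{finite,linorder}). z$i - z$j)" by (intro continuous_intros)
    ultimately have "x$i - x$j < 0 \<longleftrightarrow> y$i - y$j < 0"
      using sign_const[OF con, of "\<lambda>z. z$i - z$j" 0 x y] xy by blast
    thus ?thesis by simp
  qed
  have cl: "x$i - x$j < 1 \<longleftrightarrow> y$i - y$j < 1" if ij: "i < j \<and> {i,j} \<in> E" for i j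
  proof -
    have "\<forall>z\<in>C. z$i - z$j \<noteq> 1" using sub ij unfolding gen_def by auto
    moreover have "continuous_on C (\<lambda>z::real^('n::{finite,linorder}). z$i - z$j)" by (intro continuous_intros)
    ultimately show ?thesis
      using sign_const[OF con, of "\<lambda>z. z$i - z$j" 1 x y] xy by blast
  qed
  show ?thesis unfolding sim_def using ord cl by blast
qed

lemma comb_ne:
  fixes a b u :: real
  assumes "a < c \<longleftrightarrow> b < c" "a \<noteq> c" "b \<noteq> c" "0 \<le> u" "u \<le> 1"
  shows "(1 - u) * a + u * b \<noteq> c"
proof -
  have e: "(1 - u) * a + u * b - c = (1 - u) * (a - c) + u * (b - c)" by (simp add: algebra_simps)
  show ?thesis
  proof (cases "a < c")
    case True
    hence "b < c" using assms by simp
    have "(1 - u) * (a - c) \<le> 0" using True assms(5) by (simp add: mult_nonneg_nonpos)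
    moreover have "u * (b - c) \<le> 0" using \<open>b < c\<close> assms(4) by (simp add: mult_nonneg_nonpos)
    moreover have "(1 - u) * (a - c) < 0 \<or> u * (b - c) < 0"
      using True \<open>b < c\<close> assms(4,5) by (cases "u = 0") (auto simp: mult_pos_neg)
    ultimately have "(1 - u) * (a - c) + u * (b - c) < 0" by linarith
    thus ?thesis using e by linarith
  next
    case False
    hence ac: "a > c" using assms(2) by simp
    hence "b > c" using assms by auto
    have "(1 - u) * (a - c) \<ge> 0" using ac assms(5) by simp
    moreover have "u * (b - c) \<ge> 0" using \<open>b > c\<close> assms(4) by simp
    moreover have "(1 - u) * (a - c) > 0 \<or> u * (b - c) > 0"
      using ac \<open>b > c\<close> assms(4,5) by (cases "u = 0") auto
    ultimately have "(1 - u) * (a - c) + u * (b - c) > 0" by linarith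
    thus ?thesis using e by linarith
  qed
qed

lemma sim_comp:
  fixes x y :: "real^('n::{finite,linorder})"
  assumes gx: "gen E x" and gy: "gen E y" and s: "sim E x y"
  shows "y \<in> connected_component_set {z. gen E z} x"
proof -
  have seg: "closed_segment x y \<subseteq> {z. gen E z}"
  proof
    fix z assume "z \<in> closed_segment x y"
    then obtain u where u: "0 \<le> u" "u \<le> 1" "z = (1 - u) *\<^sub>R x + u *\<^sub>R y"
      unfolding in_segment by blast
    have zc: "\<And>k. z$k = (1 - u) * x$k + u * y$k" using u(3) by simp
    have dz: "distc z" unfolding distc_def
    proof (intro allI impI)
      fix i j :: 'n assume ij: "i \<noteq> j"
      have "x$i \<noteq> x$j" "y$i \<noteq> y$j" using gx gy ij unfolding gen_def distc_def by auto
      hence "x$i - x$j \<noteq> 0" "y$i - y$j \<noteq> 0" by auto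
      moreover have "x$i - x$j < 0 \<longleftrightarrow> y$i - y$j < 0" using s unfolding sim_def by simp
      ultimately have "(1 - u) * (x$i - x$j) + u * (y$i - y$j) \<noteq> 0"
        using comb_ne[of "x$i - x$j" 0 "y$i - y$j" u] u(1,2) by blast
      hence "(1 - u) * x$i + u * y$i - ((1 - u) * x$j + u * y$j) \<noteq> 0"
        by (simp add: algebra_simps)
      thus "z$i \<noteq> z$j" using zc by simp
    qed
    have "\<forall>i j. i < j \<and> {i,j} \<in> E \<longrightarrow> z$i - z$j \<noteq> 1"
    proof (intro allI impI)
      fix i j :: 'n assume ij: "i < j \<and> {i,j} \<in> E"
      have "x$i - x$j \<noteq> 1" "y$i - y$j \<noteq> 1" using gx gy ij unfolding gen_def by auto
      moreover have "x$i - x$j < 1 \<longleftrightarrow> y$i - y$j < 1" using s ij unfolding sim_def by blast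
      ultimately have "(1 - u) * (x$i - x$j) + u * (y$i - y$j) \<noteq> 1"
        using comb_ne[of "x$i - x$j" 1 "y$i - y$j" u] u(1,2) by blast
      hence "(1 - u) * x$i + u * y$i - ((1 - u) * x$j + u * y$j) \<noteq> 1"
        by (simp add: algebra_simps)
      thus "z$i - z$j \<noteq> 1" using zc by simp
    qed
    thus "z \<in> {z. gen E z}" using dz unfolding gen_def by simp
  qed
  have "closed_segment x y \<subseteq> connected_component_set {z. gen E z} x"
    by (rule connected_component_maximal) (auto simp: seg)
  thus ?thesis by auto
qed

lemma realize:
  fixes R :: "nat \<Rightarrow> nat"
  assumes "\<forall>p<N. p \<le> R p \<and> R p < N" "\<forall>p q. p \<le> q \<longrightarrow> q < N \<longrightarrow> R p \<le> R q"
  shows "\<exists>y::nat\<Rightarrow>real. (\<forall>p q. p < q \<longrightarrow> q < N \<longrightarrow> y p < y q) \<and>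
     (\<forall>p q. p < q \<longrightarrow> q < N \<longrightarrow> (q \<le> R p \<longrightarrow> y q - y p < 1) \<and> (R p < q \<longrightarrow> y q - y p > 1))"
  using assms
proof (induction N arbitrary: R)
  case 0 thus ?case by auto
next
  case (Suc N)
  show ?case
  proof (cases "N = 0")
    case True thus ?thesis by auto
  next
    case False
    define R' where "R' p = min (R p) (N - 1)" for p
    have a1: "\<forall>p<N. p \<le> R' p \<and> R' p < N"
    proof (intro allI impI)
      fix p assume "p < N"
      thus "p \<le> R' p \<and> R' p < N" using Suc.prems(1)[rule_format, of p] \<open>N \<noteq> 0\<close> unfolding R'_def by (auto simp: min_def)
    qed
    have a2: "\<forall>p q. p \<le> q \<longrightarrow> q < N \<longrightarrow> R' p \<le> R' q"
    proof (intro allI impI)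
      fix p q :: nat assume "p \<le> q" "q < N"
      hence "R p \<le> R q" using Suc.prems(2)[rule_format, of p q] by simp
      thus "R' p \<le> R' q" unfolding R'_def by simp
    qed
    obtain y :: "nat \<Rightarrow> real" where yy: "(\<forall>p q. p < q \<longrightarrow> q < N \<longrightarrow> y p < y q) \<and>
      (\<forall>p q. p < q \<longrightarrow> q < N \<longrightarrow> (q \<le> R' p \<longrightarrow> y q - y p < 1) \<and> (R' p < q \<longrightarrow> y q - y p > 1))"
      using Suc.IH[OF a1 a2] ..
    note y1 = conjunct1[OF yy] and y2 = conjunct2[OF yy]
    have y2': "\<forall>p q. p < q \<longrightarrow> q < N \<longrightarrow> (q \<le> R p \<longrightarrow> y q - y p < 1) \<and> (R p < q \<longrightarrow> y q - y p > 1)"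
    proof (intro allI impI)
      fix p q assume pq: "p < q" "q < N"
      have "q \<le> R' p \<longleftrightarrow> q \<le> R p" using pq unfolding R'_def by auto
      thus "(q \<le> R p \<longrightarrow> y q - y p < 1) \<and> (R p < q \<longrightarrow> y q - y p > 1)"
        using y2 pq by (meson not_le)
    qed
    have ymono: "\<And>p q. p \<le> q \<Longrightarrow> q < N \<Longrightarrow> y p \<le> y q"
    proof -
      fix p q :: nat assume "p \<le> q" "q < N"
      thus "y p \<le> y q" using y1[rule_format, of p q] by (cases "p = q") auto
    qed
    have RN: "N \<le> R N" using Suc.prems(1)[rule_format, of N] by simp
    define p0 where "p0 = (LEAST p. N \<le> R p)"
    have p0: "N \<le> R p0" "p0 \<le> N" unfolding p0_def using RN by (auto intro: LeastI Least_le)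
    have p0iff: "\<And>p. p < N \<Longrightarrow> N \<le> R p \<longleftrightarrow> p0 \<le> p"
    proof -
      fix p assume p: "p < N"
      show "N \<le> R p \<longleftrightarrow> p0 \<le> p"
      proof
        assume "N \<le> R p" thus "p0 \<le> p" unfolding p0_def by (rule Least_le)
      next
        assume "p0 \<le> p"
        hence "R p0 \<le> R p" using Suc.prems(2)[rule_format, of p0 p] p by simp
        thus "N \<le> R p" using p0 by simp
      qed
    qed
    define lo where "lo = (if p0 = 0 then y (N - 1) else max (y (N - 1)) (y (p0 - 1) + 1))"
    define v where "v = (if p0 < N then (lo + (y p0 + 1)) / 2 else lo + 1)"
    have lo1: "y (N - 1) \<le> lo" unfolding lo_def by auto
    have lo2: "p0 > 0 \<Longrightarrow> y (p0 - 1) + 1 \<le> lo" unfolding lo_def by auto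
    have hi: "p0 < N \<Longrightarrow> lo < y p0 + 1"
    proof -
      assume pN: "p0 < N"
      have "y (N - 1) < y p0 + 1"
      proof (cases "p0 = N - 1")
        case True thus ?thesis by simp
      next
        case False
        hence "p0 < N - 1" using pN by simp
        moreover have "N - 1 \<le> R p0" using p0 by simp
        moreover have "N - 1 < N" using \<open>N \<noteq> 0\<close> by simp
        ultimately show ?thesis using y2'[rule_format, of p0 "N - 1"] by linarith
      qed
      moreover have "p0 > 0 \<Longrightarrow> y (p0 - 1) + 1 < y p0 + 1" using y1[rule_format, of "p0 - 1" p0] pN by simp
      ultimately show ?thesis unfolding lo_def by auto
    qed
    have vlo: "lo < v" unfolding v_def using hi by auto
    have vhi: "p0 < N \<Longrightarrow> v < y p0 + 1" unfolding v_def using hi by auto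
    define z where "z = y(N := v)"
    show ?thesis
    proof (intro exI[of _ z] conjI allI impI)
      fix p q :: nat assume pq: "p < q" "q < Suc N"
      show "z p < z q"
      proof (cases "q = N")
        case True
        have "y p \<le> y (N - 1)" using ymono pq True by simp
        thus ?thesis using True pq lo1 vlo unfolding z_def by simp
      next
        case False
        hence "q < N" using pq by simp
        thus ?thesis using pq y1[rule_format, of p q] unfolding z_def by simp
      qed
    next
      fix p q :: nat assume pq: "p < q" "q < Suc N" "q \<le> R p"
      show "z q - z p < 1"
      proof (cases "q = N")
        case True
        hence "p0 \<le> p" using p0iff pq by simp
        hence "p0 < N" using pq True by simp
        have "y p0 \<le> y p" using ymono \<open>p0 \<le> p\<close> pq True by simp
        thus ?thesis using True pq vhi[OF \<open>p0 < N\<close>] unfolding z_def by simp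
      next
        case False
        hence "q < N" using pq by simp
        thus ?thesis using pq y2'[rule_format, of p q] unfolding z_def by simp
      qed
    next
      fix p q :: nat assume pq: "p < q" "q < Suc N" "R p < q"
      show "z q - z p > 1"
      proof (cases "q = N")
        case True
        hence "p < N" using pq by simp
        hence "\<not> p0 \<le> p" using p0iff[of p] pq True by simp
        hence "p \<le> p0 - 1" "p0 > 0" by auto
        have "y p \<le> y (p0 - 1)" using ymono \<open>p \<le> p0 - 1\<close> p0 \<open>p0 > 0\<close> by simp
        thus ?thesis using True pq lo2[OF \<open>p0 > 0\<close>] vlo unfolding z_def by simp
      next
        case False
        hence "q < N" using pq by simp
        thus ?thesis using pq y2'[rule_format, of p q] unfolding z_def by simp
      qed
    qed
  qed
qed

definition pf :: "('n::finite \<Rightarrow> nat) \<Rightarrow> bool" where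
  "pf a \<longleftrightarrow> (\<forall>s<CARD('n). s + 1 \<le> card {i. a i \<le> s})"

lemma card_split: "card {i::'n::finite. P i} + card {i. \<not> P i} = CARD('n)"
proof -
  have "{i::'n. P i} \<union> {i. \<not> P i} = UNIV" by auto
  moreover have "{i::'n. P i} \<inter> {i. \<not> P i} = {}" by auto
  ultimately show ?thesis by (metis card_Un_disjoint finite)
qed

lemma rk_card_le:
  fixes x :: "real^('n::finite)"
  assumes d: "distc x" and s: "s < CARD('n)"
  shows "card {i. rk x i \<le> s} = s + 1"
proof -
  have bij: "bij_betw (rk x) UNIV {..<CARD('n)}" using rk_bij[OF d] .
  have inj: "inj (rk x)" using bij bij_betw_def by blast
  have "rk x ` {i. rk x i \<le> s} = {..s}"
  proof
    show "rk x ` {i. rk x i \<le> s} \<subseteq> {..s}" by auto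
  next
    show "{..s} \<subseteq> rk x ` {i. rk x i \<le> s}"
    proof
      fix k assume "k \<in> {..s}"
      hence "k < CARD('n)" using s by simp
      then obtain i where "rk x i = k" using rk_surj[OF d] by blast
      thus "k \<in> rk x ` {i. rk x i \<le> s}" using \<open>k \<in> {..s}\<close> by auto
    qed
  qed
  hence "card (rk x ` {i. rk x i \<le> s}) = s + 1" by simp
  thus ?thesis using inj by (simp add: card_image inj_on_subset)
qed

lemma gv_pf:
  fixes x :: "real^('n::{finite,linorder})"
  assumes d: "distc x"
  shows "pf (gv E x)"
  unfolding pf_def
proof (intro allI impI)
  fix s assume s: "s < CARD('n)"
  have "{i. rk x i \<le> s} \<subseteq> {i. gv E x i \<le> s}"
  proof
    fix i assume "i \<in> {i. rk x i \<le> s}"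
    moreover have "gv E x i \<le> rk x i" unfolding gv_def by simp
    ultimately show "i \<in> {i. gv E x i \<le> s}" by simp
  qed
  hence "card {i. rk x i \<le> s} \<le> card {i. gv E x i \<le> s}" by (simp add: card_mono)
  thus "s + 1 \<le> card {i. gv E x i \<le> s}" using rk_card_le[OF d s] by simp
qed

lemma pf_unique:
  fixes a b :: "'n::finite \<Rightarrow> nat"
  assumes pa: "pf a" and pb: "pf b" and am: "\<forall>i. a i < CARD('n) + 1"
    and ab: "\<forall>i. b i = (a i + c) mod (CARD('n) + 1)"
  shows "b = a"
proof -
  define N where "N = CARD('n)"
  define c' where "c' = c mod (N + 1)"
  have ab': "\<And>i. b i = (a i + c') mod (N + 1)"
    using ab unfolding c'_def N_def by (simp add: mod_add_right_eq)
  have am': "\<And>i. a i < N + 1" using am unfolding N_def by simp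
  show ?thesis
  proof (cases "c' = 0")
    case True
    thus ?thesis using ab' am' by (intro ext) simp
  next
    case False
    have c'le: "c' \<le> N" unfolding c'_def using mod_less_divisor[of "N+1" c] by simp
    have sub: "{i. b i \<le> c' - 1} \<subseteq> {i. \<not> a i \<le> N - c'}"
    proof
      fix i assume "i \<in> {i. b i \<le> c' - 1}"
      hence bi: "b i \<le> c' - 1" by simp
      show "i \<in> {i. \<not> a i \<le> N - c'}"
      proof (rule ccontr)
        assume "i \<notin> {i. \<not> a i \<le> N - c'}"
        hence "a i \<le> N - c'" by simp
        hence "a i + c' < N + 1" using c'le by simp
        hence "b i = a i + c'" using ab' by simp
        thus False using bi False by simp
      qed
    qed
    have "card {i. b i \<le> c' - 1} \<le> card {i. \<not> a i \<le> N - c'}" using sub by (simp add: card_mono)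
    also have "\<dots> = N - card {i. a i \<le> N - c'}" using card_split[of "\<lambda>i. a i \<le> N - c'"]
      unfolding N_def by simp
    also have "\<dots> \<le> N - (N - c' + 1)"
    proof (rule diff_le_mono2)
      have sN: "N - c' < N" using False c'le by simp
      thus "N - c' + 1 \<le> card {i. a i \<le> N - c'}" using pa unfolding pf_def N_def by blast
    qed
    finally have "card {i. b i \<le> c' - 1} \<le> c' - 1" using False c'le by simp
    moreover have "c' - 1 + 1 \<le> card {i. b i \<le> c' - 1}"
    proof -
      have "c' - 1 < N" using False c'le by simp
      thus ?thesis using pb unfolding pf_def N_def by blast
    qed
    ultimately show ?thesis using False by simp
  qed
qed

lemma mod_shift_back:
  fixes x c m :: nat
  assumes m: "0 < m"
  shows "((x + c) mod m + (m - c mod m)) mod m = x mod m"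
proof -
  have cm: "c mod m < m" using m by simp
  have eq: "x + c + (m - c mod m) = x + m * (c div m + 1)"
  proof -
    have "c = m * (c div m) + c mod m" by simp
    hence "x + c + (m - c mod m) = x + m * (c div m) + (c mod m + (m - c mod m))" by linarith
    also have "\<dots> = x + m * (c div m) + m" using cm by simp
    finally show ?thesis by (simp add: algebra_simps)
  qed
  have "((x + c) mod m + (m - c mod m)) mod m = (x + c + (m - c mod m)) mod m"
    by (simp add: mod_add_left_eq)
  also have "\<dots> = (x + m * (c div m + 1)) mod m" by (subst eq) (rule refl)
  also have "\<dots> = x mod m" by (rule mod_mult_self2)
  finally show ?thesis .
qed

lemma mod_add_cancel_nat:
  fixes x y c m :: nat
  assumes m: "0 < m"
  shows "(x + c) mod m = (y + c) mod m \<longleftrightarrow> x mod m = y mod m"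
proof
  assume "(x + c) mod m = (y + c) mod m"
  hence "((x + c) mod m + (m - c mod m)) mod m = ((y + c) mod m + (m - c mod m)) mod m" by simp
  thus "x mod m = y mod m" using mod_shift_back[OF m] by simp
next
  assume "x mod m = y mod m"
  thus "(x + c) mod m = (y + c) mod m" by (metis mod_add_left_eq)
qed

lemma cosetrel_equiv: "equiv (zvecs :: ('n::finite \<Rightarrow> nat) set) cosetrel"
proof (rule equivI)
  show "(cosetrel :: (('n \<Rightarrow> nat) \<times> _) set) \<subseteq> zvecs \<times> zvecs"
    unfolding cosetrel_def by auto
next
  show "refl_on zvecs (cosetrel :: (('n \<Rightarrow> nat) \<times> _) set)"
    unfolding refl_on_def cosetrel_def zvecs_def
    by (auto intro!: exI[of _ 0])
next
  show "sym (cosetrel :: (('n \<Rightarrow> nat) \<times> _) set)"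
    unfolding sym_def
  proof (intro allI impI)
    fix a b :: "'n \<Rightarrow> nat" assume "(a, b) \<in> cosetrel"
    then obtain c where ab: "a \<in> zvecs" "b \<in> zvecs" "\<forall>i. b i = (a i + c) mod (CARD('n) + 1)"
      unfolding cosetrel_def by blast
    define m where "m = CARD('n) + 1"
    define c' where "c' = c mod m"
    have cm: "c' < m" unfolding c'_def m_def by simp
    have "\<forall>i. a i = (b i + (m - c')) mod m"
    proof
      fix i
      have "(b i + (m - c')) mod m = ((a i + c) mod m + (m - c')) mod m" using ab(3) m_def by simp
      also have "\<dots> = (a i) mod m" unfolding c'_def by (rule mod_shift_back) (simp add: m_def)
      also have "\<dots> = a i" using ab(1) unfolding zvecs_def m_def by simp
      finally show "a i = (b i + (m - c')) mod m" by simp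
    qed
    thus "(b, a) \<in> cosetrel" using ab unfolding cosetrel_def m_def by blast
  qed
next
  show "trans (cosetrel :: (('n \<Rightarrow> nat) \<times> _) set)"
    unfolding trans_def
  proof (intro allI impI)
    fix a b d :: "'n \<Rightarrow> nat" assume "(a, b) \<in> cosetrel" "(b, d) \<in> cosetrel"
    then obtain c1 c2 where ab: "a \<in> zvecs" "b \<in> zvecs" "\<forall>i. b i = (a i + c1) mod (CARD('n) + 1)"
      and bd: "d \<in> zvecs" "\<forall>i. d i = (b i + c2) mod (CARD('n) + 1)"
      unfolding cosetrel_def by blast
    have "\<forall>i. d i = (a i + (c1 + c2)) mod (CARD('n) + 1)"
      using ab(3) bd(2) by (simp add: mod_add_left_eq add.assoc)
    thus "(a, d) \<in> cosetrel" using ab bd unfolding cosetrel_def by blast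
  qed
qed

lemma cosetrel_eq_iff:
  assumes "(a, b) \<in> (cosetrel :: (('n::finite \<Rightarrow> nat) \<times> _) set)"
  shows "b i = b j \<longleftrightarrow> a i = a j"
proof -
  obtain c where ab: "a \<in> zvecs" "\<forall>i. b i = (a i + c) mod (CARD('n) + 1)"
    using assms unfolding cosetrel_def by blast
  define m where "m = CARD('n) + 1"
  have am: "\<And>i. a i < m" using ab(1) unfolding zvecs_def m_def by simp
  have "b i = b j \<longleftrightarrow> (a i + c) mod m = (a j + c) mod m" using ab(2) m_def by simp
  also have "\<dots> \<longleftrightarrow> a i mod m = a j mod m"
    by (rule mod_add_cancel_nat) (simp add: m_def)
  also have "\<dots> \<longleftrightarrow> a i = a j" using am by simp
  finally show ?thesis .
qed

lemma good_coset_inv: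
  assumes "(a, b) \<in> (cosetrel :: (('n::{finite,linorder} \<Rightarrow> nat) \<times> _) set)" "good_vec E a"
  shows "good_vec E b"
proof -
  have e: "\<And>i j. b i = b j \<longleftrightarrow> a i = a j" using cosetrel_eq_iff[OF assms(1)] by blast
  show ?thesis using assms(2) unfolding good_vec_def e .
qed

lemma pollak:
  fixes a :: "'n::finite \<Rightarrow> nat"
  assumes am: "\<forall>i. a i < CARD('n) + 1"
  shows "\<exists>c. pf (\<lambda>i. (a i + c) mod (CARD('n) + 1))"
proof -
  define N where "N = CARD('n)"
  define m where "m = N + 1"
  define Cnt where "Cnt s = card {i. a i \<le> s}" for s
  define f where "f s = int (Cnt s) - int s - 1" for s
  have aN: "\<And>i. a i \<le> N" using am unfolding N_def by (simp add: less_Suc_eq_le)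
  define M where "M = Min (f ` {0..N})"
  have fin: "finite (f ` {0..N})" "f ` {0..N} \<noteq> {}" by auto
  have "M \<in> f ` {0..N}" unfolding M_def using Min_in[OF fin] .
  then obtain s1 where s1: "s1 \<le> N" "f s1 = M" by auto
  define s0 where "s0 = (LEAST s. s \<le> N \<and> f s = M)"
  have s0: "s0 \<le> N" "f s0 = M" unfolding s0_def using s1 by (metis (mono_tags, lifting) LeastI)+
  have fmin: "\<And>s. s \<le> N \<Longrightarrow> f s0 \<le> f s" using s0(2) Min_le[OF fin(1)] unfolding M_def by simp
  have ffirst: "\<And>s. s < s0 \<Longrightarrow> f s0 < f s"
  proof -
    fix s assume ss: "s < s0"
    hence sN: "s \<le> N" using s0 by simp
    have "f s \<noteq> M" using ss not_less_Least[of s "\<lambda>s. s \<le> N \<and> f s = M"] sN unfolding s0_def by blast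
    thus "f s0 < f s" using fmin[OF sN] s0(2) by simp
  qed
  have Cf: "\<And>s. int (Cnt s) = f s + int s + 1" unfolding f_def by simp
  define c where "c = N - s0"
  define b where "b i = (a i + c) mod m" for i
  have bl: "\<And>i. a i \<le> s0 \<Longrightarrow> b i = a i + N - s0"
  proof -
    fix i assume "a i \<le> s0"
    hence "a i + c < m" unfolding c_def m_def using s0 by simp
    thus "b i = a i + N - s0" unfolding b_def c_def using \<open>a i \<le> s0\<close> s0 by simp
  qed
  have bh: "\<And>i. s0 < a i \<Longrightarrow> b i = a i - s0 - 1"
  proof -
    fix i assume h: "s0 < a i"
    have "a i + c = (a i - s0 - 1) + m" unfolding c_def m_def using h s0 aN[of i] by simp
    moreover have "a i - s0 - 1 < m" unfolding m_def using aN[of i] by simp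
    ultimately show "b i = a i - s0 - 1" unfolding b_def by simp
  qed
  have "pf b"
    unfolding pf_def
  proof (intro allI impI)
    fix s assume sN': "s < CARD('n)"
    hence sN: "s < N" unfolding N_def .
    show "s + 1 \<le> card {i. b i \<le> s}"
    proof (cases "s + s0 + 1 \<le> N")
      case True
      define A where "A = {i. s0 < a i \<and> a i \<le> s + s0 + 1}"
      have sub: "A \<subseteq> {i. b i \<le> s}"
      proof
        fix i assume "i \<in> A"
        hence "s0 < a i" "a i \<le> s + s0 + 1" unfolding A_def by auto
        thus "i \<in> {i. b i \<le> s}" using bh by simp
      qed
      have Aeq: "A = {i. a i \<le> s + s0 + 1} - {i. a i \<le> s0}" unfolding A_def by auto
      have "card A = Cnt (s + s0 + 1) - Cnt s0"
        unfolding Aeq Cnt_def by (rule card_Diff_subset) auto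
      moreover have "Cnt s0 \<le> Cnt (s + s0 + 1)" unfolding Cnt_def by (rule card_mono) auto
      moreover have "f s0 \<le> f (s + s0 + 1)" using fmin True by simp
      ultimately have "int (card A) \<ge> int s + 1" using Cf[of s0] Cf[of "s + s0 + 1"] by simp
      hence "s + 1 \<le> card A" by simp
      also have "\<dots> \<le> card {i. b i \<le> s}" using sub by (simp add: card_mono)
      finally show ?thesis .
    next
      case False
      define t where "t = s + s0 - N"
      have ts0: "t < s0" unfolding t_def using sN False by simp
      define A1 where "A1 = {i. s0 < a i}"
      define A2 where "A2 = {i. a i \<le> t}"
      have sub: "A1 \<union> A2 \<subseteq> {i. b i \<le> s}"
      proof
        fix i assume "i \<in> A1 \<union> A2"
        thus "i \<in> {i. b i \<le> s}"
        proof
          assume "i \<in> A1"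
          hence "s0 < a i" unfolding A1_def by simp
          thus ?thesis using bh aN[of i] False by simp
        next
          assume "i \<in> A2"
          hence "a i \<le> t" unfolding A2_def by simp
          hence "a i \<le> s0" using ts0 by simp
          thus ?thesis using bl \<open>a i \<le> t\<close> False unfolding t_def by simp
        qed
      qed
      have disj: "A1 \<inter> A2 = {}" unfolding A1_def A2_def using ts0 by auto
      have cA: "card (A1 \<union> A2) = card A1 + card A2" using disj by (simp add: card_Un_disjoint)
      have cA1: "card A1 = N - Cnt s0"
        using card_split[of "\<lambda>i. a i \<le> s0"] unfolding A1_def Cnt_def N_def by (simp add: not_le)
      have cA2: "card A2 = Cnt t" unfolding A2_def Cnt_def ..
      have CN: "Cnt s0 \<le> N" unfolding Cnt_def N_def by (rule card_mono) auto
      have "f s0 < f t" using ffirst ts0 by simp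
      hence "int (card (A1 \<union> A2)) \<ge> int s + 1"
        using cA cA1 cA2 CN Cf[of s0] Cf[of t] False unfolding t_def by (simp add: of_nat_diff)
      hence "s + 1 \<le> card (A1 \<union> A2)" by simp
      also have "\<dots> \<le> card {i. b i \<le> s}" using sub by (simp add: card_mono)
      finally show ?thesis .
    qed
  qed
  thus ?thesis unfolding b_def m_def N_def by blast
qed

definition istop :: "('n::{finite,linorder} \<Rightarrow> nat) \<Rightarrow> 'n \<Rightarrow> bool" where
  "istop a t \<longleftrightarrow> (\<exists>j. t < j \<and> a t = a j)"

definition nx :: "('n::{finite,linorder} \<Rightarrow> nat) \<Rightarrow> 'n \<Rightarrow> 'n" where
  "nx a t = (LEAST j. t < j \<and> a t = a j)"

lemma nx_prop:
  assumes "istop a t"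
  shows "t < nx a t \<and> a t = a (nx a t) \<and> (\<forall>k. t < k \<and> a t = a k \<longrightarrow> nx a t \<le> k)"
proof -
  obtain j where "t < j \<and> a t = a j" using assms unfolding istop_def by blast
  from least_finite[of "\<lambda>j. t < j \<and> a t = a j", OF this] show ?thesis
    unfolding nx_def by blast
qed

lemma nx_inj:
  assumes "istop a t" "istop a t'" "nx a t = nx a t'"
  shows "t = t'"
proof (rule ccontr)
  assume ne: "t \<noteq> t'"
  have p: "t < nx a t" "a t = a (nx a t)" "\<And>k. t < k \<Longrightarrow> a t = a k \<Longrightarrow> nx a t \<le> k"
    using nx_prop[OF assms(1)] by auto
  have p': "t' < nx a t'" "a t' = a (nx a t')" "\<And>k. t' < k \<Longrightarrow> a t' = a k \<Longrightarrow> nx a t' \<le> k"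
    using nx_prop[OF assms(2)] by auto
  show False
  proof (cases "t < t'")
    case True
    have "a t = a t'" using p(2) p'(2) assms(3) by simp
    hence "nx a t \<le> t'" using p(3) True by blast
    thus False using p'(1) assms(3) by simp
  next
    case False
    hence "t' < t" using ne by simp
    have "a t' = a t" using p(2) p'(2) assms(3) by simp
    hence "nx a t' \<le> t" using p'(3) \<open>t' < t\<close> by blast
    thus False using p(1) assms(3) by simp
  qed
qed

lemma bot_unique:
  assumes "\<not> istop a b" "\<not> istop a b'" "a b = a b'"
  shows "b = b'"
proof (rule ccontr)
  assume "b \<noteq> b'"
  hence "b < b' \<or> b' < b" by auto
  thus False using assms unfolding istop_def by auto
qed

definition avail :: "('n::{finite,linorder} \<Rightarrow> nat) \<Rightarrow> ('n \<Rightarrow> nat option) \<Rightarrow> 'n \<Rightarrow> bool" where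
  "avail a m t \<longleftrightarrow> t \<notin> dom m \<and> istop a t \<and> nx a t \<in> dom m"

definition pick :: "('n::{finite,linorder} \<Rightarrow> nat) \<Rightarrow> ('n \<Rightarrow> nat option) \<Rightarrow> nat \<Rightarrow> 'n" where
  "pick a m s = (if \<exists>b. \<not> istop a b \<and> a b = s then (THE b. \<not> istop a b \<and> a b = s)
     else (SOME t. avail a m t \<and> (\<forall>t'. avail a m t' \<longrightarrow> the (m (nx a t)) \<le> the (m (nx a t')))))"

primrec st :: "('n::{finite,linorder} \<Rightarrow> nat) \<Rightarrow> nat \<Rightarrow> ('n \<Rightarrow> nat option)" where
  "st a 0 = Map.empty"
| "st a (Suc s) = (st a s)(pick a (st a s) s \<mapsto> s)"

definition Inv :: "('n::{finite,linorder} \<Rightarrow> nat) \<Rightarrow> nat \<Rightarrow> ('n \<Rightarrow> nat option) \<Rightarrow> bool" where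
  "Inv a s m \<longleftrightarrow>
    (\<forall>i k. m i = Some k \<longrightarrow> k < s) \<and>
    (\<forall>i j k. m i = Some k \<longrightarrow> m j = Some k \<longrightarrow> i = j) \<and>
    card (dom m) = s \<and>
    (\<forall>b. \<not> istop a b \<longrightarrow> (b \<in> dom m \<longleftrightarrow> a b < s) \<and> (b \<in> dom m \<longrightarrow> m b = Some (a b))) \<and>
    (\<forall>t. istop a t \<longrightarrow> t \<in> dom m \<longrightarrow> nx a t \<in> dom m \<and> the (m (nx a t)) < the (m t)) \<and>
    (\<forall>t t'. istop a t \<longrightarrow> istop a t' \<longrightarrow> t' \<in> dom m \<longrightarrow> nx a t \<in> dom m \<longrightarrow>
        the (m (nx a t)) < the (m (nx a t')) \<longrightarrow> t \<in> dom m \<and> the (m t) < the (m t'))"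

lemma Inv_0: "Inv a 0 Map.empty"
  unfolding Inv_def by simp

lemma avail_exists:
  fixes a :: "'n::{finite,linorder} \<Rightarrow> nat"
  assumes pfa: "pf a" and s: "s < CARD('n)" and I: "Inv a s m"
    and nb: "\<not> (\<exists>b. \<not> istop a b \<and> a b = s)"
  shows "\<exists>t. avail a m t"
proof -
  have cd: "card (dom m) = s" using I unfolding Inv_def by blast
  have bot: "\<And>b. \<not> istop a b \<Longrightarrow> b \<in> dom m \<longleftrightarrow> a b < s" using I unfolding Inv_def by blast
  have "s + 1 \<le> card {i. a i \<le> s}" using pfa s unfolding pf_def by blast
  have "\<not> {i. a i \<le> s} \<subseteq> dom m"
  proof
    assume "{i. a i \<le> s} \<subseteq> dom m"
    hence "card {i. a i \<le> s} \<le> card (dom m)" by (simp add: card_mono)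
    thus False using cd \<open>s + 1 \<le> card {i. a i \<le> s}\<close> by simp
  qed
  then obtain i where i: "a i \<le> s" "i \<notin> dom m" by blast
  define U where "U = {k. a k = a i \<and> k \<notin> dom m}"
  have fU: "finite U" "U \<noteq> {}" using i unfolding U_def by auto
  define t where "t = Max U"
  have tU: "t \<in> U" unfolding t_def using Max_in[OF fU] .
  have tmax: "\<And>k. k \<in> U \<Longrightarrow> k \<le> t" unfolding t_def using Max_ge[OF fU(1)] by blast
  have at: "a t = a i" "t \<notin> dom m" using tU unfolding U_def by auto
  have tt: "istop a t"
  proof (rule ccontr)
    assume nt: "\<not> istop a t"
    have "a t \<noteq> s" using nb nt by blast
    hence "a t < s" using at i by simp
    hence "t \<in> dom m" using bot[OF nt] by simp
    thus False using at by simp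
  qed
  have np: "t < nx a t" "a t = a (nx a t)" using nx_prop[OF tt] by auto
  have "nx a t \<in> dom m"
  proof (rule ccontr)
    assume "nx a t \<notin> dom m"
    hence "nx a t \<in> U" unfolding U_def using np at by simp
    hence "nx a t \<le> t" using tmax by blast
    thus False using np by simp
  qed
  thus ?thesis unfolding avail_def using at tt by blast
qed

lemma pick_bot:
  fixes a :: "'n::{finite,linorder} \<Rightarrow> nat"
  assumes "\<exists>b. \<not> istop a b \<and> a b = s"
  shows "\<not> istop a (pick a m s) \<and> a (pick a m s) = s"
proof -
  obtain b where b: "\<not> istop a b \<and> a b = s" using assms by blast
  have u: "\<And>b'. \<not> istop a b' \<and> a b' = s \<Longrightarrow> b' = b" using bot_unique b by metis
  have "(THE b. \<not> istop a b \<and> a b = s) = b" using b u by (rule the_equality)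
  thus ?thesis using assms b unfolding pick_def by simp
qed

lemma pick_top:
  fixes a :: "'n::{finite,linorder} \<Rightarrow> nat"
  assumes pfa: "pf a" and s: "s < CARD('n)" and I: "Inv a s m"
    and nb: "\<not> (\<exists>b. \<not> istop a b \<and> a b = s)"
  shows "avail a m (pick a m s) \<and> (\<forall>t'. avail a m t' \<longrightarrow> the (m (nx a (pick a m s))) \<le> the (m (nx a t')))"
proof -
  obtain t0 where t0: "avail a m t0" using avail_exists[OF assms] by blast
  define K where "K = (\<lambda>t. the (m (nx a t))) ` {t. avail a m t}"
  have fK: "finite K" "K \<noteq> {}" unfolding K_def using t0 by auto
  obtain t where t: "avail a m t" "the (m (nx a t)) = Min K"
    using Min_in[OF fK] unfolding K_def by auto
  have "\<forall>t'. avail a m t' \<longrightarrow> the (m (nx a t)) \<le> the (m (nx a t'))"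
    using t(2) Min_le[OF fK(1)] unfolding K_def by auto
  hence ex: "\<exists>t. avail a m t \<and> (\<forall>t'. avail a m t' \<longrightarrow> the (m (nx a t)) \<le> the (m (nx a t')))"
    using t(1) by blast
  have pe: "pick a m s = (SOME t. avail a m t \<and> (\<forall>t'. avail a m t' \<longrightarrow> the (m (nx a t)) \<le> the (m (nx a t'))))"
    unfolding pick_def using nb by (rule if_not_P)
  show ?thesis unfolding pe using someI_ex[OF ex] .
qed

lemma Inv_step:
  fixes a :: "'n::{finite,linorder} \<Rightarrow> nat"
  assumes pfa: "pf a" and s: "s < CARD('n)" and I: "Inv a s m"
  shows "pick a m s \<notin> dom m \<and> Inv a (Suc s) (m(pick a m s \<mapsto> s))"
proof -
  define w where "w = pick a m s"
  define m' where "m' = m(w \<mapsto> s)"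
  have I1: "\<And>i k. m i = Some k \<Longrightarrow> k < s" using I unfolding Inv_def by blast
  have I2: "\<And>i j k. m i = Some k \<Longrightarrow> m j = Some k \<Longrightarrow> i = j" using I unfolding Inv_def by blast
  have I3: "card (dom m) = s" using I unfolding Inv_def by blast
  have I4: "\<And>b. \<not> istop a b \<Longrightarrow> (b \<in> dom m \<longleftrightarrow> a b < s) \<and> (b \<in> dom m \<longrightarrow> m b = Some (a b))"
    using I unfolding Inv_def by blast
  have I5: "\<And>t. istop a t \<Longrightarrow> t \<in> dom m \<Longrightarrow> nx a t \<in> dom m \<and> the (m (nx a t)) < the (m t)"
    using I unfolding Inv_def by blast
  have I6: "\<And>t t'. istop a t \<Longrightarrow> istop a t' \<Longrightarrow> t' \<in> dom m \<Longrightarrow> nx a t \<in> dom m \<Longrightarrow>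
        the (m (nx a t)) < the (m (nx a t')) \<Longrightarrow> t \<in> dom m \<and> the (m t) < the (m t')"
    using I unfolding Inv_def by blast
  have lt: "\<And>i. i \<in> dom m \<Longrightarrow> the (m i) < s" using I1 by auto
  have wcases: "(\<not> istop a w \<and> a w = s) \<or> ((\<not> (\<exists>b. \<not> istop a b \<and> a b = s)) \<and> avail a m w \<and>
      (\<forall>t'. avail a m t' \<longrightarrow> the (m (nx a w)) \<le> the (m (nx a t'))))"
    using pick_bot[of a s m] pick_top[OF pfa s I] unfolding w_def by blast
  have wn: "w \<notin> dom m"
    using wcases I4 unfolding avail_def by auto
  have m'w: "m' w = Some s" unfolding m'_def by simp
  have m'o: "\<And>i. i \<noteq> w \<Longrightarrow> m' i = m i" unfolding m'_def by simp
  have dm': "dom m' = insert w (dom m)" unfolding m'_def by simp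
  have J1: "\<forall>i k. m' i = Some k \<longrightarrow> k < Suc s"
    using I1 unfolding m'_def by (auto split: if_splits) (metis less_SucI)
  have J2: "\<forall>i j k. m' i = Some k \<longrightarrow> m' j = Some k \<longrightarrow> i = j"
  proof (intro allI impI)
    fix i j k assume h: "m' i = Some k" "m' j = Some k"
    show "i = j"
    proof (cases "i = w \<or> j = w")
      case True
      thus ?thesis using h m'w m'o I1 by (metis less_irrefl option.inject)
    next
      case False
      thus ?thesis using h m'o I2 by metis
    qed
  qed
  have J3: "card (dom m') = Suc s" using dm' wn I3 by simp
  have J4: "\<forall>b. \<not> istop a b \<longrightarrow> (b \<in> dom m' \<longleftrightarrow> a b < Suc s) \<and> (b \<in> dom m' \<longrightarrow> m' b = Some (a b))"
  proof (intro allI impI)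
    fix b assume nb: "\<not> istop a b"
    show "(b \<in> dom m' \<longleftrightarrow> a b < Suc s) \<and> (b \<in> dom m' \<longrightarrow> m' b = Some (a b))"
    proof (cases "b = w")
      case True
      hence "a b = s" using wcases nb unfolding avail_def by blast
      thus ?thesis using True m'w dm' by simp
    next
      case False
      have "a b \<noteq> s"
      proof
        assume abs: "a b = s"
        hence "\<not> istop a w \<and> a w = s" using wcases nb by blast
        thus False using bot_unique[of a b w] nb abs False by simp
      qed
      thus ?thesis using False I4[OF nb] dm' m'o by auto
    qed
  qed
  have J5: "\<forall>t. istop a t \<longrightarrow> t \<in> dom m' \<longrightarrow> nx a t \<in> dom m' \<and> the (m' (nx a t)) < the (m' t)"
  proof (intro allI impI)
    fix t assume tt: "istop a t" and td: "t \<in> dom m'"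
    show "nx a t \<in> dom m' \<and> the (m' (nx a t)) < the (m' t)"
    proof (cases "t = w")
      case True
      hence av: "avail a m w" using wcases tt by blast
      hence nd: "nx a w \<in> dom m" unfolding avail_def by blast
      hence "nx a w \<noteq> w" using wn by auto
      thus ?thesis using True nd m'w m'o lt dm' by simp
    next
      case False
      hence "t \<in> dom m" using td dm' by simp
      hence h: "nx a t \<in> dom m \<and> the (m (nx a t)) < the (m t)" using I5 tt by blast
      hence "nx a t \<noteq> w" using wn by auto
      thus ?thesis using h False m'o dm' by simp
    qed
  qed
  have J6: "\<forall>t t'. istop a t \<longrightarrow> istop a t' \<longrightarrow> t' \<in> dom m' \<longrightarrow> nx a t \<in> dom m' \<longrightarrow>
        the (m' (nx a t)) < the (m' (nx a t')) \<longrightarrow> t \<in> dom m' \<and> the (m' t) < the (m' t')"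
  proof (intro allI impI)
    fix t t' assume tt: "istop a t" and tt': "istop a t'" and t'd: "t' \<in> dom m'"
      and ntd: "nx a t \<in> dom m'" and lk: "the (m' (nx a t)) < the (m' (nx a t'))"
    have n't: "nx a t' \<in> dom m'" "the (m' (nx a t')) < the (m' t')" using J5 tt' t'd by auto
    have le_s: "\<And>i. i \<in> dom m' \<Longrightarrow> the (m' i) \<le> s" using J1 by (metis domD less_Suc_eq_le option.sel)
    have ntw: "nx a t \<noteq> w"
    proof
      assume "nx a t = w"
      hence "the (m' (nx a t)) = s" using m'w by simp
      thus False using lk le_s[OF n't(1)] by simp
    qed
    hence ntm: "nx a t \<in> dom m" using ntd dm' by simp
    have n'tw: "nx a t' \<noteq> w"
    proof
      assume e: "nx a t' = w"
      show False
      proof (cases "t' = w")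
        case True
        hence "avail a m w" using wcases tt' by blast
        hence "nx a w \<in> dom m" unfolding avail_def by blast
        thus False using e True wn by simp
      next
        case False
        hence "t' \<in> dom m" using t'd dm' by simp
        hence "nx a t' \<in> dom m" using I5 tt' by blast
        thus False using e wn by simp
      qed
    qed
    have lk': "the (m (nx a t)) < the (m (nx a t'))" using lk ntw n'tw m'o by simp
    show "t \<in> dom m' \<and> the (m' t) < the (m' t')"
    proof (cases "t' = w")
      case True
      hence av: "avail a m w" and mn: "\<forall>t'. avail a m t' \<longrightarrow> the (m (nx a w)) \<le> the (m (nx a t'))"
        using wcases tt' by blast+
      show ?thesis
      proof (cases "t \<in> dom m")
        case True
        hence "t \<noteq> w" using wn by auto
        thus ?thesis using True \<open>t' = w\<close> m'w m'o lt dm' by simp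
      next
        case False
        hence "avail a m t" unfolding avail_def using tt ntm by blast
        hence "the (m (nx a w)) \<le> the (m (nx a t))" using mn by blast
        thus ?thesis using lk' \<open>t' = w\<close> by simp
      qed
    next
      case False
      hence t'm: "t' \<in> dom m" using t'd dm' by simp
      have "t \<in> dom m \<and> the (m t) < the (m t')" using I6[OF tt tt' t'm ntm lk'] .
      moreover hence "t \<noteq> w" using wn by auto
      ultimately show ?thesis using False m'o dm' by simp
    qed
  qed
  have "Inv a (Suc s) m'" unfolding Inv_def using J1 J2 J3 J4 J5 J6 by blast
  thus ?thesis using wn unfolding m'_def w_def by simp
qed

lemma Inv_st:
  fixes a :: "'n::{finite,linorder} \<Rightarrow> nat"
  assumes pfa: "pf a"
  shows "s \<le> CARD('n) \<Longrightarrow> Inv a s (st a s)"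
proof (induction s)
  case 0 thus ?case using Inv_0 by simp
next
  case (Suc s)
  hence "s < CARD('n)" by simp
  moreover have "Inv a s (st a s)" using Suc.IH \<open>s < CARD('n)\<close> by simp
  ultimately have "Inv a (Suc s) ((st a s)(pick a (st a s) s \<mapsto> s))"
    using Inv_step[OF pfa] by blast
  thus ?case by (simp only: st.simps)
qed

definition rr :: "('n::{finite,linorder} \<Rightarrow> nat) \<Rightarrow> 'n \<Rightarrow> nat" where
  "rr a i = the (st a CARD('n) i)"

context
  fixes a :: "'n::{finite,linorder} \<Rightarrow> nat"
  assumes pfa: "pf a"
begin

lemma Inv_fin: "Inv a CARD('n) (st a CARD('n))"
  using Inv_st[OF pfa] by simp

lemma dom_fin: "dom (st a CARD('n)) = UNIV"
proof -
  have "card (dom (st a CARD('n))) = CARD('n)" using Inv_fin unfolding Inv_def by blast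
  thus ?thesis by (metis card_subset_eq finite subset_UNIV)
qed

lemma st_some: "st a CARD('n) i = Some (rr a i)"
proof -
  have "i \<in> dom (st a CARD('n))" using dom_fin by simp
  then obtain v where "st a CARD('n) i = Some v" by auto
  thus ?thesis unfolding rr_def by simp
qed

lemma rr_lt: "rr a i < CARD('n)"
proof -
  have "\<forall>i k. st a CARD('n) i = Some k \<longrightarrow> k < CARD('n)" using Inv_fin unfolding Inv_def by blast
  thus ?thesis using st_some by blast
qed

lemma rr_inj: "rr a i = rr a j \<Longrightarrow> i = j"
proof -
  assume h: "rr a i = rr a j"
  have "\<forall>i j k. st a CARD('n) i = Some k \<longrightarrow> st a CARD('n) j = Some k \<longrightarrow> i = j"
    using Inv_fin unfolding Inv_def by blast
  thus ?thesis using st_some[of i] st_some[of j] h by metis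
qed

lemma rr_bot: "\<not> istop a b \<Longrightarrow> rr a b = a b"
proof -
  assume h: "\<not> istop a b"
  have "\<forall>b. \<not> istop a b \<longrightarrow> (b \<in> dom (st a CARD('n)) \<longleftrightarrow> a b < CARD('n)) \<and>
      (b \<in> dom (st a CARD('n)) \<longrightarrow> st a CARD('n) b = Some (a b))"
    using Inv_fin unfolding Inv_def by blast
  hence "st a CARD('n) b = Some (a b)" using h dom_fin by blast
  thus ?thesis using st_some[of b] by simp
qed

lemma rr_top: "istop a t \<Longrightarrow> rr a (nx a t) < rr a t"
proof -
  assume h: "istop a t"
  have "\<forall>t. istop a t \<longrightarrow> t \<in> dom (st a CARD('n)) \<longrightarrow> nx a t \<in> dom (st a CARD('n)) \<and>
      the (st a CARD('n) (nx a t)) < the (st a CARD('n) t)"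
    using Inv_fin unfolding Inv_def by blast
  thus ?thesis using h dom_fin unfolding rr_def by blast
qed

lemma rr_mono: "istop a t \<Longrightarrow> istop a t' \<Longrightarrow> rr a (nx a t) < rr a (nx a t') \<Longrightarrow> rr a t < rr a t'"
proof -
  assume h: "istop a t" "istop a t'" "rr a (nx a t) < rr a (nx a t')"
  have "\<forall>t t'. istop a t \<longrightarrow> istop a t' \<longrightarrow> t' \<in> dom (st a CARD('n)) \<longrightarrow> nx a t \<in> dom (st a CARD('n)) \<longrightarrow>
        the (st a CARD('n) (nx a t)) < the (st a CARD('n) (nx a t')) \<longrightarrow>
        t \<in> dom (st a CARD('n)) \<and> the (st a CARD('n) t) < the (st a CARD('n) t')"
    using Inv_fin unfolding Inv_def by blast
  thus ?thesis using h dom_fin unfolding rr_def by blast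
qed

lemma rr_surj: "k < CARD('n) \<Longrightarrow> \<exists>i. rr a i = k"
proof -
  assume k: "k < CARD('n)"
  have inj: "inj (rr a)" using rr_inj by (meson injI)
  have "rr a ` UNIV \<subseteq> {..<CARD('n)}" using rr_lt by auto
  moreover have "card (rr a ` UNIV) = CARD('n)" using inj by (simp add: card_image)
  ultimately have "rr a ` UNIV = {..<CARD('n)}" by (metis card_lessThan card_subset_eq finite_lessThan)
  thus ?thesis using k by (metis imageE lessThan_iff)
qed

lemma rr_card: "card {k. rr a k < rr a i} = rr a i"
proof -
  have inj: "inj (rr a)" using rr_inj by (meson injI)
  have "rr a ` {k. rr a k < rr a i} = {..<rr a i}"
  proof
    show "rr a ` {k. rr a k < rr a i} \<subseteq> {..<rr a i}" by auto
  next
    show "{..<rr a i} \<subseteq> rr a ` {k. rr a k < rr a i}"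
    proof
      fix q assume "q \<in> {..<rr a i}"
      hence "q < CARD('n)" using rr_lt[of i] by simp
      then obtain k where "rr a k = q" using rr_surj by blast
      thus "q \<in> rr a ` {k. rr a k < rr a i}" using \<open>q \<in> {..<rr a i}\<close> by auto
    qed
  qed
  hence "card (rr a ` {k. rr a k < rr a i}) = rr a i" by simp
  thus ?thesis using inj by (simp add: card_image inj_on_subset)
qed

definition Rf :: "nat \<Rightarrow> nat" where
  "Rf p = Max (insert p {rr a t | t. istop a t \<and> rr a (nx a t) \<le> p})"

lemma Rf_fin: "finite (insert p {rr a t | t. istop a t \<and> rr a (nx a t) \<le> p})"
proof -
  have "{rr a t | t. istop a t \<and> rr a (nx a t) \<le> p} \<subseteq> rr a ` UNIV" by auto
  thus ?thesis by (simp add: finite_subset)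
qed

lemma Rf_ge: "p \<le> Rf p"
  unfolding Rf_def using Rf_fin by simp

lemma Rf_lt: "p < CARD('n) \<Longrightarrow> Rf p < CARD('n)"
proof -
  assume p: "p < CARD('n)"
  have "Rf p \<in> insert p {rr a t | t. istop a t \<and> rr a (nx a t) \<le> p}"
    unfolding Rf_def using Rf_fin by (rule Max_in) simp
  thus ?thesis using p rr_lt by auto
qed

lemma Rf_mono: "p \<le> q \<Longrightarrow> Rf p \<le> Rf q"
proof -
  assume pq: "p \<le> q"
  have "insert p {rr a t | t. istop a t \<and> rr a (nx a t) \<le> p} \<noteq> {}" by simp
  moreover have "\<forall>v \<in> insert p {rr a t | t. istop a t \<and> rr a (nx a t) \<le> p}. v \<le> Rf q"
  proof
    fix v assume "v \<in> insert p {rr a t | t. istop a t \<and> rr a (nx a t) \<le> p}"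
    hence "v = p \<or> v \<in> insert q {rr a t | t. istop a t \<and> rr a (nx a t) \<le> q}" using pq by auto
    moreover have "p \<le> Rf q" using pq Rf_ge[of q] by simp
    moreover have "v \<in> insert q {rr a t | t. istop a t \<and> rr a (nx a t) \<le> q} \<Longrightarrow> v \<le> Rf q"
      unfolding Rf_def using Rf_fin by simp
    ultimately show "v \<le> Rf q" by blast
  qed
  ultimately show ?thesis unfolding Rf_def using Rf_fin by simp
qed

lemma Rf_big: "rr a k \<le> Rf p \<Longrightarrow> p < rr a k \<Longrightarrow> \<exists>t. istop a t \<and> rr a (nx a t) \<le> p \<and> rr a k \<le> rr a t"
proof -
  assume h: "rr a k \<le> Rf p" "p < rr a k"
  have "Rf p \<in> insert p {rr a t | t. istop a t \<and> rr a (nx a t) \<le> p}"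
    unfolding Rf_def using Rf_fin by (rule Max_in) simp
  moreover have "Rf p \<noteq> p" using h by simp
  ultimately obtain t where "istop a t" "rr a (nx a t) \<le> p" "Rf p = rr a t" by auto
  thus ?thesis using h by auto
qed

lemma Rf_top: "istop a t \<Longrightarrow> rr a t \<le> Rf (rr a (nx a t))"
  unfolding Rf_def using Rf_fin by (intro Max_ge) auto

end

lemma construct:
  fixes a :: "'n::{finite,linorder} \<Rightarrow> nat" and E :: "'n set set"
  assumes pfa: "pf a" and ga: "good_vec E a"
  shows "\<exists>x::real^('n::{finite,linorder}). gen E x \<and> gv E x = a"
proof -
  define N where "N = CARD('n)"
  have c1: "\<forall>p<N. p \<le> Rf a p \<and> Rf a p < N"
    using Rf_ge[OF pfa] Rf_lt[OF pfa] unfolding N_def by blast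
  have c2: "\<forall>p q. p \<le> q \<longrightarrow> q < N \<longrightarrow> Rf a p \<le> Rf a q"
    using Rf_mono[OF pfa] by blast
  obtain y :: "nat \<Rightarrow> real" where yy: "(\<forall>p q. p < q \<longrightarrow> q < N \<longrightarrow> y p < y q) \<and>
     (\<forall>p q. p < q \<longrightarrow> q < N \<longrightarrow> (q \<le> Rf a p \<longrightarrow> y q - y p < 1) \<and> (Rf a p < q \<longrightarrow> y q - y p > 1))"
    using realize[OF c1 c2] ..
  have y1: "\<And>p q. p < q \<Longrightarrow> q < N \<Longrightarrow> y p < y q" using yy by blast
  have y2: "\<And>p q. p < q \<Longrightarrow> q < N \<Longrightarrow> q \<le> Rf a p \<Longrightarrow> y q - y p < 1" using yy by blast
  have y3: "\<And>p q. p < q \<Longrightarrow> q < N \<Longrightarrow> Rf a p < q \<Longrightarrow> y q - y p > 1" using yy by blast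
  define x :: "real^('n::{finite,linorder})" where "x = (\<chi> i. y (rr a i))"
  have xi: "\<And>i. x$i = y (rr a i)" unfolding x_def by simp
  have rN: "\<And>i. rr a i < N" using rr_lt[OF pfa] unfolding N_def by blast
  have X1: "\<And>i j. x$i < x$j \<longleftrightarrow> rr a i < rr a j"
  proof -
    fix i j
    show "x$i < x$j \<longleftrightarrow> rr a i < rr a j"
    proof
      assume "rr a i < rr a j" thus "x$i < x$j" using y1 rN xi by simp
    next
      assume h: "x$i < x$j"
      show "rr a i < rr a j"
      proof (rule ccontr)
        assume "\<not> rr a i < rr a j"
        hence "rr a j < rr a i \<or> rr a j = rr a i" by auto
        thus False
        proof
          assume "rr a j < rr a i" hence "x$j < x$i" using y1 rN xi by simp
          thus False using h by simp
        next
          assume "rr a j = rr a i" thus False using h xi by simp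
        qed
      qed
    qed
  qed
  have X1': "\<And>i j. x$i \<le> x$j \<longleftrightarrow> rr a i \<le> rr a j" using X1 by (meson not_le)
  have dx: "distc x" unfolding distc_def
  proof (intro allI impI)
    fix i j :: 'n assume "i \<noteq> j"
    hence "rr a i \<noteq> rr a j" using rr_inj[OF pfa] by blast
    hence "rr a i < rr a j \<or> rr a j < rr a i" by auto
    thus "x$i \<noteq> x$j" using X1[of i j] X1[of j i] by auto
  qed
  have X3: "\<And>i j. rr a j < rr a i \<Longrightarrow> (x$i - x$j < 1 \<longleftrightarrow> rr a i \<le> Rf a (rr a j)) \<and> x$i - x$j \<noteq> 1"
  proof -
    fix i j assume h: "rr a j < rr a i"
    show "(x$i - x$j < 1 \<longleftrightarrow> rr a i \<le> Rf a (rr a j)) \<and> x$i - x$j \<noteq> 1"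
    proof (cases "rr a i \<le> Rf a (rr a j)")
      case True
      thus ?thesis using y2[OF h rN True] xi by simp
    next
      case False
      hence "Rf a (rr a j) < rr a i" by simp
      thus ?thesis using y3[OF h rN] xi False by simp
    qed
  qed
  have gx: "gen E x" unfolding gen_def
  proof (intro conjI allI impI)
    show "distc x" by fact
  next
    fix i j :: 'n assume "i < j \<and> {i,j} \<in> E"
    show "x$i - x$j \<noteq> 1"
    proof (cases "rr a j < rr a i")
      case True thus ?thesis using X3 by blast
    next
      case False
      hence "\<not> x$j < x$i" using X1 by blast
      thus ?thesis by simp
    qed
  qed
  have obsr: "\<And>i j. obs E x i j \<longleftrightarrow> i < j \<and> {i,j} \<in> E \<and> rr a j < rr a i \<and> rr a i \<le> Rf a (rr a j)"
  proof -
    fix i j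
    show "obs E x i j \<longleftrightarrow> i < j \<and> {i,j} \<in> E \<and> rr a j < rr a i \<and> rr a i \<le> Rf a (rr a j)"
    proof (cases "rr a j < rr a i")
      case True
      have "x$i < x$j + 1 \<longleftrightarrow> x$i - x$j < 1" by linarith
      thus ?thesis unfolding obs_def using X1 X3[OF True] True by blast
    next
      case False
      thus ?thesis unfolding obs_def using X1 by blast
    qed
  qed
  have edge: "\<And>t. istop a t \<Longrightarrow> {t, nx a t} \<in> E"
    using ga unfolding good_vec_def istop_def nx_def by blast
  have tie1: "\<And>t. istop a t \<Longrightarrow> tie E x t (nx a t)"
  proof -
    fix t assume tt: "istop a t"
    have o: "obs E x t (nx a t)"
      unfolding obsr using nx_prop[OF tt] edge[OF tt] rr_top[OF pfa tt] Rf_top[OF pfa tt] by blast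
    show "tie E x t (nx a t)"
      unfolding tie_def
    proof (intro conjI notI)
      show "obs E x t (nx a t)" by fact
    next
      assume "\<exists>k l. obs E x k l \<and> (k, l) \<noteq> (t, nx a t) \<and> x $ l \<le> x $ nx a t \<and> x $ t \<le> x $ k"
      then obtain k l where kl: "obs E x k l" "(k, l) \<noteq> (t, nx a t)" "x $ l \<le> x $ nx a t" "x $ t \<le> x $ k"
        by blast
      have r1: "rr a l \<le> rr a (nx a t)" "rr a t \<le> rr a k" using kl(3,4) X1' by auto
      have r2: "rr a l < rr a k" "rr a k \<le> Rf a (rr a l)" using kl(1) obsr by auto
      obtain t' where t': "istop a t'" "rr a (nx a t') \<le> rr a l" "rr a k \<le> rr a t'"
        using Rf_big[OF pfa r2(2) r2(1)] by blast
      show False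
      proof (cases "rr a (nx a t') < rr a (nx a t)")
        case True
        hence "rr a t' < rr a t" using rr_mono[OF pfa t'(1) tt] by blast
        thus False using t'(3) r1(2) by simp
      next
        case False
        hence eq: "rr a (nx a t') = rr a (nx a t)" "rr a l = rr a (nx a t)" using t'(2) r1(1) by auto
        hence "nx a t' = nx a t" "l = nx a t" using rr_inj[OF pfa] by blast+
        hence "t' = t" using nx_inj[OF t'(1) tt] by blast
        hence "rr a k = rr a t" using t'(3) r1(2) by simp
        hence "k = t" using rr_inj[OF pfa] by blast
        thus False using kl(2) \<open>l = nx a t\<close> by simp
      qed
    qed
  qed
  have tieiff: "\<And>t u. tie E x t u \<longleftrightarrow> istop a t \<and> u = nx a t"
  proof
    fix t u assume tu: "tie E x t u"
    have r2: "rr a u < rr a t" "rr a t \<le> Rf a (rr a u)" using tie_obs[OF tu] obsr by auto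
    obtain t' where t': "istop a t'" "rr a (nx a t') \<le> rr a u" "rr a t \<le> rr a t'"
      using Rf_big[OF pfa r2(2) r2(1)] by blast
    have "x$(nx a t') \<le> x$u" "x$t \<le> x$t'" using t' X1' by auto
    hence "t' = t \<and> nx a t' = u" using tie_maxD[OF tu tie_obs[OF tie1[OF t'(1)]]] by blast
    thus "istop a t \<and> u = nx a t" using t' by blast
  next
    fix t u assume "istop a t \<and> u = nx a t"
    thus "tie E x t u" using tie1 by blast
  qed
  have rkx: "\<And>i. rk x i = rr a i"
  proof -
    fix i
    have "{k. x$k < x$i} = {k. rr a k < rr a i}" using X1 by blast
    thus "rk x i = rr a i" unfolding rk_def using rr_card[OF pfa] by simp
  qed
  have avt: "\<And>i k. (tie E x)\<^sup>*\<^sup>* i k \<Longrightarrow> a i = a k"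
  proof -
    fix i k assume "(tie E x)\<^sup>*\<^sup>* i k"
    thus "a i = a k"
    proof (induction rule: rtranclp_induct)
      case base thus ?case by simp
    next
      case (step u v)
      hence "istop a u" "v = nx a u" using tieiff by auto
      thus ?case using nx_prop step.IH by metis
    qed
  qed
  have "gv E x = a"
  proof
    fix i
    obtain b where b: "(tie E x)\<^sup>*\<^sup>* i b" "\<forall>c. \<not> tie E x b c" "gv E x i = rk x b"
      using gv_bottom_ex by blast
    have nb: "\<not> istop a b" using b(2) tieiff by blast
    show "gv E x i = a i" using b(3) rkx rr_bot[OF pfa nb] avt[OF b(1)] by simp
  qed
  thus ?thesis using gx by blast
qed

lemma comp_eq_ccs:
  assumes "C \<in> components S" "x \<in> C"
  shows "C = connected_component_set S x"
proof -
  obtain z where z: "z \<in> S" "C = connected_component_set S z" using assms(1) components_iff by blast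
  thus ?thesis using connected_component_eq assms(2) by metis
qed

lemma gv_zvecs: "gv E (x::real^('n::{finite,linorder})) \<in> zvecs"
  unfolding zvecs_def using gv_lt[of E x] by (simp add: less_SucI)

theorem main:
  fixes E :: "('n::{finite,linorder}) set set"
  shows "\<exists>f. bij_betw f (regions (arrS E)) (good_cosets E)"
proof -
  define S where "S = {z::real^('n::{finite,linorder}). gen E z}"
  have reg: "regions (arrS E) = components S" unfolding S_def by (rule regions_eq)
  define pk where "pk C = (SOME x. x \<in> C)" for C :: "(real^('n::{finite,linorder})) set"
  have pk: "\<And>C. C \<in> components S \<Longrightarrow> pk C \<in> C \<and> gen E (pk C)"
  proof -
    fix C assume C: "C \<in> components S"
    have "C \<noteq> {}" using in_components_nonempty[OF C] .
    hence "pk C \<in> C" unfolding pk_def by (simp add: some_in_eq)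
    moreover have "C \<subseteq> S" using in_components_subset[OF C] .
    ultimately show "pk C \<in> C \<and> gen E (pk C)" unfolding S_def by auto
  qed
  define F where "F C = cosetrel `` {gv E (pk C)}" for C
  have eqv: "equiv zvecs (cosetrel :: (('n \<Rightarrow> nat) \<times> _) set)" by (rule cosetrel_equiv)
  have into: "\<And>C. C \<in> components S \<Longrightarrow> F C \<in> good_cosets E"
  proof -
    fix C assume C: "C \<in> components S"
    have g: "gen E (pk C)" using pk[OF C] by blast
    have q: "F C \<in> cosets" unfolding F_def cosets_def by (rule quotientI) (rule gv_zvecs)
    have "\<forall>b\<in>F C. good_vec E b"
    proof
      fix b assume "b \<in> F C"
      hence "(gv E (pk C), b) \<in> cosetrel" unfolding F_def by simp
      moreover have "good_vec E (gv E (pk C))" using gv_good g unfolding gen_def by blast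
      ultimately show "good_vec E b" by (rule good_coset_inv)
    qed
    thus "F C \<in> good_cosets E" unfolding good_cosets_def using q by blast
  qed
  have inj: "inj_on F (components S)"
  proof (rule inj_onI)
    fix C1 C2 assume C1: "C1 \<in> components S" and C2: "C2 \<in> components S" and e: "F C1 = F C2"
    define x1 where "x1 = pk C1"
    define x2 where "x2 = pk C2"
    have x1: "x1 \<in> C1" "gen E x1" using pk[OF C1] unfolding x1_def by auto
    have x2: "x2 \<in> C2" "gen E x2" using pk[OF C2] unfolding x2_def by auto
    have "gv E x1 \<in> F C1" unfolding F_def x1_def using equiv_class_self[OF eqv gv_zvecs] .
    hence "gv E x1 \<in> F C2" using e by simp
    hence "(gv E x2, gv E x1) \<in> cosetrel" unfolding F_def x2_def by simp
    then obtain c where c: "\<forall>i. gv E x1 i = (gv E x2 i + c) mod (CARD('n) + 1)"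
      unfolding cosetrel_def by blast
    have d1: "distc x1" and d2: "distc x2" using x1 x2 unfolding gen_def by auto
    have "gv E x1 = gv E x2"
      using pf_unique[OF gv_pf[OF d2] gv_pf[OF d1] _ c] gv_zvecs[of E x2] unfolding zvecs_def by blast
    hence "sim E x1 x2" using gv_eq_sim[OF d1 d2] by blast
    hence "x2 \<in> connected_component_set S x1" using sim_comp[OF x1(2) x2(2)] unfolding S_def by blast
    hence "connected_component_set S x2 = connected_component_set S x1" by (rule connected_component_eq)
    thus "C1 = C2" using comp_eq_ccs[OF C1 x1(1)] comp_eq_ccs[OF C2 x2(1)] by simp
  qed
  have onto: "good_cosets E \<subseteq> F ` components S"
  proof
    fix D assume D: "D \<in> good_cosets E"
    hence Dq: "D \<in> zvecs // cosetrel" and Dg: "\<forall>b\<in>D. good_vec E b"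
      unfolding good_cosets_def cosets_def by auto
    obtain a0 where a0: "D = cosetrel `` {a0}" "a0 \<in> zvecs" using Dq by (rule quotientE) blast
    have a0m: "\<forall>i. a0 i < CARD('n) + 1" using a0(2) unfolding zvecs_def by simp
    obtain c where pfa: "pf (\<lambda>i. (a0 i + c) mod (CARD('n) + 1))" using pollak[OF a0m] by blast
    define a where "a = (\<lambda>i. (a0 i + c) mod (CARD('n) + 1))"
    have az: "a \<in> zvecs" unfolding zvecs_def a_def by simp
    have a0a: "(a0, a) \<in> cosetrel" unfolding cosetrel_def a_def using a0(2) az a_def by blast
    hence "a \<in> D" using a0(1) by simp
    hence ga: "good_vec E a" using Dg by blast
    obtain x where x: "gen E x" "gv E x = a" using construct[OF pfa[folded a_def] ga] by blast
    define C where "C = connected_component_set S x"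
    have xS: "x \<in> S" unfolding S_def using x by simp
    have C: "C \<in> components S" unfolding C_def using components_iff xS by blast
    have xC: "x \<in> C" unfolding C_def using xS by simp
    have "sim E x (pk C)" using comp_sim[of C E x "pk C"] C xC pk[OF C] unfolding S_def by blast
    hence "gv E (pk C) = a" using sim_gv x(2) by metis
    hence "F C = cosetrel `` {a}" unfolding F_def by simp
    also have "\<dots> = cosetrel `` {a0}" using equiv_class_eq[OF eqv a0a] by simp
    finally have "F C = D" using a0(1) by simp
    thus "D \<in> F ` components S" using C by blast
  qed
  have "F ` components S \<subseteq> good_cosets E" using into by blast
  hence "F ` components S = good_cosets E" using onto by blast
  hence "bij_betw F (components S) (good_cosets E)" using inj unfolding bij_betw_def by blast
  thus ?thesis unfolding reg by blast
qed

theorem theorem1p2: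
  fixes E :: "('n::{finite,linorder}) set set"
  assumes "simple_graph_edges E"
  shows "\<exists>f. bij_betw f (regions (arrS E)) (good_cosets E)"
  by (rule main)

end
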